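(* For every positive integer $s$, $$\Big(\mathcal{D}_s\big(\Psi_{2s-1}(\mathbf{x}*\mathbf{y};t)\big)\Big)\Big|_{\mathbf{y}=0}=0,$$ where $\mathbf{x}=(x_1,\dots,x_s)$, $\mathbf{y}=(y_1,\dots,y_{s-1})$, $\mathbf{x}*\mathbf{y}=(x_1,y_1,\dots,x_{s-1},y_{s-1},x_s)$, and $$\mathcal{D}_s=\frac{\partial^s}{\partial x_1\cdots\partial x_s}-\prod_{i=1}^{s-1}\Big(\frac{\partial}{\partial x_i}+\frac{\partial}{\partial x_{i+1}}+t\frac{\partial}{\partial y_i}\Big).$$ Equivalently, $\frac{\partial^s}{\partial x_1\cdots\partial x_s}\Psi_s(\mathbf{x};t)=\Big(\prod_{i=1}^{s-1}\big(\frac{\partial}{\partial x_i}+\frac{\partial}{\partial x_{i+1}}+t\frac{\partial}{\partial y_i}\big)\Psi_{2s-1}(\mathbf{x}*\mathbf{y};t)\Big)\Big|_{\mathbf{y}=0}$.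
   Context: Ladder diagrams: $Q^+$ is the directed graph on $\mathbb{Z}_{\ge0}^2$ with edges $((i,j),(i,j+1))$ and $((i,j),(i+1,j))$. For a sequence $\mathbf{k}=(k_1,\dots,k_s)$ of positive integers with sum $n$, let $n_0=0$, $n_i=\sum_{j\le i}k_j$, $T_{\mathbf{k}}=\{(n_\ell,n-n_\ell):0\le\ell\le s\}$ (terminal vertices), and $\Gamma_{\mathbf{k}}$ the induced subgraph of $Q^+$ on $\{(a,b):a\le c,b\le d\text{ for some }(c,d)\in T_{\mathbf{k}}\}$. For a sequence of nonnegative integers, $\Gamma_{\mathbf{k}}$ is defined as $\Gamma$ of the subsequence of its positive entries (for the all-zero sequence this is the single vertex $(0,0)$, which is also its unique terminal vertex). A positive path is a shortest directed path from $(0,0)$ to a terminal vertex; a face of $\Gamma_{\mathbf{k}}$ is a subgraph containing all terminal vertices which is a union of positive paths; its dimension is $\operatorname{rank}H_1$ of it as a 1-dimensional CW complex. The $f$-polynomial is $F_{\mathbf{k}}(t)=\sum_\gamma t^{\dim\gamma}$ over all faces $\gamma$ of $\Gamma_{\mathbf{k}}$ (by Theorem 1.1, this is also the $f$-polynomial of the corresponding Gelfand–Cetlin polytope). The exponential generating function is the formal power series $\Psi_s(x_1,\dots,x_s;t)=\sum_{\mathbf{k}\in\mathbb{Z}_{\ge0}^s}F_{\mathbf{k}}(t)\frac{x_1^{k_1}\cdots x_s^{k_s}}{k_1!\cdots k_s!}$. *)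

theory Defs
  imports "HOL-Computational_Algebra.Polynomial"
begin

type_synonym vert = "nat \<times> nat"

definition pos_part :: "nat list \<Rightarrow> nat list" where
  "pos_part k = filter (\<lambda>x. 0 < x) k"

definition terminals :: "nat list \<Rightarrow> vert set" where
  "terminals k = (let kp = pos_part k; n = sum_list kp in
      {(sum_list (take l kp), n - sum_list (take l kp)) | l. l \<le> length kp})"

definition lverts :: "nat list \<Rightarrow> vert set" where
  "lverts k = {(a, b). \<exists>(c, d) \<in> terminals k. a \<le> c \<and> b \<le> d}"

definition Qplus_edge :: "vert \<Rightarrow> vert \<Rightarrow> bool" where
  "Qplus_edge u v \<longleftrightarrow> (fst v = fst u \<and> snd v = Suc (snd u)) \<or> (fst v = Suc (fst u) \<and> snd v = snd u)"

definition ledges :: "nat list \<Rightarrow> (vert \<times> vert) set" where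
  "ledges k = {(u, v). u \<in> lverts k \<and> v \<in> lverts k \<and> Qplus_edge u v}"

definition path_edges :: "vert list \<Rightarrow> (vert \<times> vert) set" where
  "path_edges ps = set (zip ps (tl ps))"

definition dpath :: "nat list \<Rightarrow> vert list \<Rightarrow> vert \<Rightarrow> vert \<Rightarrow> bool" where
  "dpath k ps u v \<longleftrightarrow> ps \<noteq> [] \<and> hd ps = u \<and> last ps = v \<and> set ps \<subseteq> lverts k
      \<and> path_edges ps \<subseteq> ledges k"

definition positive_path :: "nat list \<Rightarrow> vert list \<Rightarrow> bool" where
  "positive_path k ps \<longleftrightarrow> last ps \<in> terminals k \<and> dpath k ps (0, 0) (last ps)
      \<and> (\<forall>qs. dpath k qs (0, 0) (last ps) \<longrightarrow> length ps \<le> length qs)"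

definition is_face :: "nat list \<Rightarrow> vert set \<times> (vert \<times> vert) set \<Rightarrow> bool" where
  "is_face k \<gamma> \<longleftrightarrow> (\<exists>S. (\<forall>ps \<in> S. positive_path k ps)
       \<and> fst \<gamma> = (\<Union>ps \<in> S. set ps) \<and> snd \<gamma> = (\<Union>ps \<in> S. path_edges ps))
     \<and> terminals k \<subseteq> fst \<gamma>"

definition comp_rel :: "vert set \<times> (vert \<times> vert) set \<Rightarrow> vert rel" where
  "comp_rel \<gamma> = {(u, v). u \<in> fst \<gamma> \<and> v \<in> fst \<gamma> \<and> (u, v) \<in> (snd \<gamma> \<union> (snd \<gamma>)\<inverse>)\<^sup>*}"

text \<open>rank H_1 of a finite 1-dimensional CW complex: #E - #V + #components.\<close>
definition face_dim :: "vert set \<times> (vert \<times> vert) set \<Rightarrow> nat" where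
  "face_dim \<gamma> = card (snd \<gamma>) + card (fst \<gamma> // comp_rel \<gamma>) - card (fst \<gamma>)"

definition fpoly :: "nat list \<Rightarrow> int poly" where
  "fpoly k = (\<Sum>\<gamma> \<in> {\<gamma>. is_face k \<gamma>}. monom 1 (face_dim \<gamma>))"

text \<open>A formal power series in m variables is represented by its coefficient function
  on exponent vectors (lists of length m); values on other lists are irrelevant.\<close>
type_synonym mser = "nat list \<Rightarrow> rat poly"

definition Psi :: "nat \<Rightarrow> mser" where
  "Psi m = (\<lambda>k. if length k = m
      then smult (inverse (of_nat (prod_list (map fact k)))) (map_poly of_int (fpoly k))
      else 0)"

text \<open>Partial derivative with respect to the variable at (0-based) position p.\<close>
definition pd :: "nat \<Rightarrow> mser \<Rightarrow> mser" where
  "pd p f = (\<lambda>k. smult (of_nat (Suc (k ! p))) (f (k[p := Suc (k ! p)])))"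

text \<open>In Psi_(2s-1)(x*y), x_i (1-based) sits at position 2(i-1) and y_i at position 2i-1.\<close>
definition Dx :: "nat \<Rightarrow> mser \<Rightarrow> mser" where
  "Dx s f = fold (\<lambda>i g. pd (2 * i) g) [0..<s] f"

text \<open>The factor d/dx_(j+1) + d/dx_(j+2) + t d/dy_(j+1) (0-based j).\<close>
definition factor_op :: "nat \<Rightarrow> mser \<Rightarrow> mser" where
  "factor_op j g = (\<lambda>k. pd (2 * j) g k + pd (2 * j + 2) g k + [:0, 1:] * pd (2 * j + 1) g k)"

definition Pop :: "nat \<Rightarrow> mser \<Rightarrow> mser" where
  "Pop s f = fold factor_op [0..<s - 1] f"

definition Dop :: "nat \<Rightarrow> mser \<Rightarrow> mser" where
  "Dop s f = (\<lambda>k. Dx s f k - Pop s f k)"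

text \<open>Setting y = 0: series in x_1..x_s whose coefficient at k is the coefficient at x^k y^0.\<close>
definition yzero :: "nat \<Rightarrow> mser \<Rightarrow> mser" where
  "yzero s g = (\<lambda>k. if length k = s
      then g (map (\<lambda>q. if even q then k ! (q div 2) else 0) [0..<2 * s - 1])
      else 0)"

end

theory Submission
  imports Defs
begin

definition lev :: "vert \<Rightarrow> nat" where "lev v = fst v + snd v"

definition mp :: "vert list \<Rightarrow> bool" where
  "mp ps \<longleftrightarrow> ps \<noteq> [] \<and> hd ps = (0,0) \<and> (\<forall>(u,v)\<in>path_edges ps. Qplus_edge u v)"

definition faceT :: "vert set \<Rightarrow> vert set \<times> (vert \<times> vert) set \<Rightarrow> bool" where
  "faceT T \<gamma> \<longleftrightarrow> (\<exists>S. (\<forall>ps\<in>S. mp ps \<and> last ps \<in> T) \<and> fst \<gamma> = (\<Union>ps\<in>S. set ps)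
      \<and> snd \<gamma> = (\<Union>ps\<in>S. path_edges ps)) \<and> T \<subseteq> fst \<gamma>"

definition fT :: "vert set \<Rightarrow> int poly" where
  "fT T = (\<Sum>\<gamma>\<in>{\<gamma>. faceT T \<gamma>}. monom 1 (face_dim \<gamma>))"

definition box :: "vert set \<Rightarrow> vert set" where
  "box T = {(a, b). \<exists>(c, d) \<in> T. a \<le> c \<and> b \<le> d}"

lemma path_edges_simps[simp]:
  "path_edges [] = {}" "path_edges [a] = {}"
  "path_edges (a # b # xs) = insert (a, b) (path_edges (b # xs))"
  by (auto simp: path_edges_def)

lemma path_edges_nth:
  "(u, v) \<in> path_edges ps \<longleftrightarrow> (\<exists>i. Suc i < length ps \<and> u = ps ! i \<and> v = ps ! Suc i)"
proof
  assume "(u, v) \<in> path_edges ps"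
  then obtain i where "i < length ps - 1" "u = ps ! i" "v = ps ! Suc i"
    by (auto simp: path_edges_def set_zip nth_tl)
  then show "\<exists>i. Suc i < length ps \<and> u = ps ! i \<and> v = ps ! Suc i"
    by (intro exI[of _ i]) auto
next
  assume "\<exists>i. Suc i < length ps \<and> u = ps ! i \<and> v = ps ! Suc i"
  then obtain i where i: "Suc i < length ps" "u = ps ! i" "v = ps ! Suc i" by blast
  then have "(ps ! i, tl ps ! i) \<in> set (zip ps (tl ps))"
    by (auto simp: set_zip intro!: exI[of _ i])
  then show "(u, v) \<in> path_edges ps" using i by (simp add: path_edges_def nth_tl)
qed

lemma path_edges_snoc:
  "xs \<noteq> [] \<Longrightarrow> path_edges (xs @ [x]) = insert (last xs, x) (path_edges xs)"
proof (induction xs)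
  case Nil then show ?case by simp
next
  case (Cons a xs)
  then show ?case by (cases xs) auto
qed

lemma path_edges_subset: "path_edges ps \<subseteq> set ps \<times> set ps"
  by (auto simp: path_edges_nth)

lemma path_edges_butlast: "path_edges (butlast ps) \<subseteq> path_edges ps"
proof (cases "ps = []")
  case False
  show ?thesis
  proof (cases "butlast ps = []")
    case F2: False
    have "path_edges ps = path_edges (butlast ps @ [last ps])" using False by simp
    also have "\<dots> = insert (last (butlast ps), last ps) (path_edges (butlast ps))"
      using path_edges_snoc[OF F2] by simp
    finally show ?thesis by blast
  qed simp
qed simp

lemma qplus_lev: "Qplus_edge u v \<Longrightarrow> lev v = Suc (lev u)"
  by (auto simp: Qplus_edge_def lev_def)

lemma qplus_le: "Qplus_edge u v \<Longrightarrow> fst u \<le> fst v \<and> snd u \<le> snd v"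
  by (auto simp: Qplus_edge_def)

lemma mp_edge: "mp ps \<Longrightarrow> Suc i < length ps \<Longrightarrow> Qplus_edge (ps ! i) (ps ! Suc i)"
  unfolding mp_def using path_edges_nth by blast

lemma mp_lev: "mp ps \<Longrightarrow> i < length ps \<Longrightarrow> lev (ps ! i) = i"
proof (induction i)
  case 0
  then show ?case by (auto simp: mp_def hd_conv_nth lev_def)
next
  case (Suc i)
  then show ?case using mp_edge[OF Suc.prems(1), of i] qplus_lev by auto
qed

lemma mp_mono: "mp ps \<Longrightarrow> i \<le> j \<Longrightarrow> j < length ps \<Longrightarrow> fst (ps ! i) \<le> fst (ps ! j) \<and> snd (ps ! i) \<le> snd (ps ! j)"
proof (induction j)
  case 0 then show ?case by simp
next
  case (Suc j)
  show ?case
  proof (cases "i = Suc j")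
    case False
    then have "fst (ps ! i) \<le> fst (ps ! j) \<and> snd (ps ! i) \<le> snd (ps ! j)" using Suc by auto
    moreover have "fst (ps ! j) \<le> fst (ps ! Suc j) \<and> snd (ps ! j) \<le> snd (ps ! Suc j)"
      using qplus_le mp_edge Suc.prems by blast
    ultimately show ?thesis by auto
  qed simp
qed

lemma mp_last_lev: "mp ps \<Longrightarrow> lev (last ps) = length ps - 1"
  using mp_lev[of ps "length ps - 1"] by (auto simp: mp_def last_conv_nth)

lemma mp_in_set_le: "mp ps \<Longrightarrow> v \<in> set ps \<Longrightarrow> fst v \<le> fst (last ps) \<and> snd v \<le> snd (last ps)"
  using mp_mono[of ps _ "length ps - 1"] by (auto simp: in_set_conv_nth mp_def last_conv_nth)

lemma mp_lev_last: "mp ps \<Longrightarrow> v \<in> set ps \<Longrightarrow> lev v = lev (last ps) \<Longrightarrow> v = last ps"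
  using mp_lev[of ps] mp_last_lev[of ps]
  by (auto simp: in_set_conv_nth mp_def last_conv_nth)

lemma mp_lev_le: "mp ps \<Longrightarrow> v \<in> set ps \<Longrightarrow> lev v \<le> lev (last ps)"
  using mp_in_set_le[of ps v] by (auto simp: lev_def)

lemma mp_reach: "mp ps \<Longrightarrow> v \<in> set ps \<Longrightarrow> ((0,0), v) \<in> (path_edges ps)\<^sup>*"
proof -
  assume mp: "mp ps" and v: "v \<in> set ps"
  have "i < length ps \<Longrightarrow> ((0,0), ps ! i) \<in> (path_edges ps)\<^sup>*" for i
  proof (induction i)
    case 0 then show ?case using mp by (auto simp: mp_def hd_conv_nth)
  next
    case (Suc i)
    then have "(ps ! i, ps ! Suc i) \<in> path_edges ps" using path_edges_nth by blast
    with Suc show ?case by (meson Suc_lessD rtrancl.rtrancl_into_rtrancl)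
  qed
  then show ?thesis using v by (auto simp: in_set_conv_nth)
qed

lemma mp_pred: "mp ps \<Longrightarrow> v \<in> set ps \<Longrightarrow> v \<noteq> (0,0) \<Longrightarrow> \<exists>u. (u, v) \<in> path_edges ps"
proof -
  assume mp: "mp ps" and v: "v \<in> set ps" and nz: "v \<noteq> (0,0)"
  obtain i where i: "i < length ps" "v = ps ! i" using v by (auto simp: in_set_conv_nth)
  have "i \<noteq> 0"
  proof
    assume "i = 0" then show False using i nz mp by (auto simp: mp_def hd_conv_nth)
  qed
  then obtain j where "i = Suc j" by (cases i) auto
  then have "(ps ! j, ps ! i) \<in> path_edges ps" unfolding path_edges_nth using i by auto
  then show ?thesis using i by blast
qed

lemma mp_snoc: "mp ps \<Longrightarrow> Qplus_edge (last ps) v \<Longrightarrow> mp (ps @ [v])"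
  by (auto simp: mp_def path_edges_snoc)

lemma mp_butlast: "mp ps \<Longrightarrow> length ps \<ge> 2 \<Longrightarrow> mp (butlast ps)"
proof -
  assume a: "mp ps" "length ps \<ge> 2"
  obtain x ys where ps1: "ps = x # ys" using a(2) by (cases ps) auto
  obtain y zs where ps2: "ys = y # zs" using a(2) ps1 by (cases ys) auto
  have h: "hd ps = (0,0)" and e: "\<forall>(u, v)\<in>path_edges ps. Qplus_edge u v" using a(1) unfolding mp_def by auto
  have "butlast ps \<noteq> []" using ps1 ps2 by simp
  moreover have "hd (butlast ps) = (0,0)" using ps1 ps2 h by simp
  moreover have "\<forall>(u, v)\<in>path_edges (butlast ps). Qplus_edge u v"
      using e path_edges_butlast[of ps] by blast
  ultimately show ?thesis unfolding mp_def by blast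
qed

definition psums :: "nat list \<Rightarrow> nat set" where
  "psums k = {sum_list (take l k) | l. l \<le> length k}"

lemma psums_Nil[simp]: "psums [] = {0}"
  by (auto simp: psums_def)

lemma psums_Cons: "psums (x # k) = insert 0 ((+) x ` psums k)"
proof (intro set_eqI iffI)
  fix p assume "p \<in> psums (x # k)"
  then obtain l where l: "l \<le> Suc (length k)" "p = sum_list (take l (x # k))"
    by (auto simp: psums_def)
  show "p \<in> insert 0 ((+) x ` psums k)"
  proof (cases l)
    case 0 then show ?thesis using l by simp
  next
    case (Suc l') then show ?thesis using l by (auto simp: psums_def)
  qed
next
  fix p assume "p \<in> insert 0 ((+) x ` psums k)"
  then consider "p = 0" | l where "l \<le> length k" "p = x + sum_list (take l k)"
    by (auto simp: psums_def)
  then show "p \<in> psums (x # k)"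
  proof cases
    case 1 then show ?thesis unfolding psums_def by (intro CollectI exI[of _ 0]) simp
  next
    case 2 then show ?thesis unfolding psums_def by (intro CollectI exI[of _ "Suc l"]) simp
  qed
qed

lemma zero_in_psums: "0 \<in> psums k"
  unfolding psums_def by (intro CollectI exI[of _ 0]) simp

lemma psums_pos_part: "psums (pos_part k) = psums k \<and> sum_list (pos_part k) = sum_list k"
proof (induction k)
  case Nil then show ?case by (simp add: pos_part_def)
next
  case (Cons x k)
  show ?case
  proof (cases "x = 0")
    case True
    then have "pos_part (x # k) = pos_part k" by (simp add: pos_part_def)
    moreover have "psums (x # k) = psums k" using True zero_in_psums[of k]
      by (auto simp: psums_Cons)
    ultimately show ?thesis using Cons True by simp
  next
    case False
    then have "pos_part (x # k) = x # pos_part k" by (simp add: pos_part_def)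
    then show ?thesis using Cons by (simp add: psums_Cons)
  qed
qed

lemma terminals_eq: "terminals k = (\<lambda>p. (p, sum_list k - p)) ` psums k"
proof -
  have "terminals k = (\<lambda>p. (p, sum_list (pos_part k) - p)) ` psums (pos_part k)"
    unfolding terminals_def Let_def psums_def by auto
  then show ?thesis using psums_pos_part[of k] by simp
qed

lemma finite_psums: "finite (psums k)"
proof -
  have "psums k = (\<lambda>l. sum_list (take l k)) ` {..length k}" unfolding psums_def by auto
  then show ?thesis by simp
qed

lemma finite_terminals: "finite (terminals k)"
  using finite_psums by (simp add: terminals_eq)

lemma lverts_box: "lverts k = box (terminals k)"
  by (simp add: lverts_def box_def)

lemma box_mono_pt: "(c, d) \<in> T \<Longrightarrow> a \<le> c \<Longrightarrow> b \<le> d \<Longrightarrow> (a, b) \<in> box T"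
  unfolding box_def by blast

lemma finite_box: "finite T \<Longrightarrow> finite (box T)"
proof -
  assume "finite T"
  have "box T \<subseteq> (\<Union>(c, d)\<in>T. {0..c} \<times> {0..d})" unfolding box_def by auto
  moreover have "finite (\<Union>(c, d)\<in>T. {0..c} \<times> {0..d})" using \<open>finite T\<close> by auto
  ultimately show ?thesis by (rule finite_subset)
qed

lemma mp_set_box: "mp ps \<Longrightarrow> last ps \<in> T \<Longrightarrow> set ps \<subseteq> box T"
proof
  fix v assume "mp ps" "last ps \<in> T" "v \<in> set ps"
  then show "v \<in> box T" using mp_in_set_le[of ps v] box_mono_pt[of "fst (last ps)" "snd (last ps)" T]
    by (cases v) auto
qed

lemma dpath_mp: "dpath k ps (0,0) v \<Longrightarrow> mp ps \<and> last ps = v"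
  unfolding dpath_def mp_def ledges_def by auto

lemma positive_path_iff: "positive_path k ps \<longleftrightarrow> mp ps \<and> last ps \<in> terminals k"
proof
  assume "positive_path k ps"
  then show "mp ps \<and> last ps \<in> terminals k"
    unfolding positive_path_def using dpath_mp by blast
next
  assume a: "mp ps \<and> last ps \<in> terminals k"
  then have mp: "mp ps" and lt: "last ps \<in> terminals k" by auto
  have sb: "set ps \<subseteq> lverts k" using mp_set_box[OF mp lt] by (simp add: lverts_box)
  have "path_edges ps \<subseteq> ledges k"
  proof
    fix e assume e: "e \<in> path_edges ps"
    obtain u v where uv: "e = (u, v)" by (cases e)
    have "u \<in> set ps" "v \<in> set ps" using e uv path_edges_subset by auto
    moreover have "Qplus_edge u v" using e uv mp unfolding mp_def by auto
    ultimately show "e \<in> ledges k" using sb uv unfolding ledges_def by auto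
  qed
  then have dp: "dpath k ps (0, 0) (last ps)"
    using mp sb unfolding dpath_def mp_def by auto
  have "length ps \<le> length qs" if "dpath k qs (0, 0) (last ps)" for qs
  proof -
    have "mp qs" "last qs = last ps" using dpath_mp[OF that] by auto
    then have "length qs - 1 = length ps - 1" using mp_last_lev[of qs] mp_last_lev[OF mp] by simp
    moreover have "qs \<noteq> []" "ps \<noteq> []" using \<open>mp qs\<close> mp unfolding mp_def by auto
    ultimately show ?thesis by (cases qs; cases ps) auto
  qed
  then show "positive_path k ps" unfolding positive_path_def using lt dp by blast
qed

lemma is_face_iff: "is_face k \<gamma> \<longleftrightarrow> faceT (terminals k) \<gamma>"
  unfolding is_face_def faceT_def positive_path_iff by blast

lemma fpoly_fT: "fpoly k = fT (terminals k)"
  unfolding fpoly_def fT_def is_face_iff by simp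

lemma faceT_E:
  assumes "faceT T \<gamma>"
  obtains S where "\<forall>ps\<in>S. mp ps \<and> last ps \<in> T" "fst \<gamma> = (\<Union>ps\<in>S. set ps)"
    "snd \<gamma> = (\<Union>ps\<in>S. path_edges ps)" "T \<subseteq> fst \<gamma>"
  using assms unfolding faceT_def by blast

lemma face_edge:
  assumes "faceT T \<gamma>" "(u, v) \<in> snd \<gamma>"
  shows "u \<in> fst \<gamma> \<and> v \<in> fst \<gamma> \<and> Qplus_edge u v"
proof -
  obtain S where S: "\<forall>ps\<in>S. mp ps \<and> last ps \<in> T" "fst \<gamma> = (\<Union>ps\<in>S. set ps)"
    "snd \<gamma> = (\<Union>ps\<in>S. path_edges ps)" using assms(1) by (rule faceT_E)
  then obtain ps where ps: "ps \<in> S" "(u, v) \<in> path_edges ps" using assms(2) by auto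
  then have "u \<in> set ps" "v \<in> set ps" using path_edges_subset by auto
  moreover have "Qplus_edge u v" using ps S(1) unfolding mp_def by auto
  ultimately show ?thesis using ps S by auto
qed

lemma face_box:
  assumes "faceT T \<gamma>"
  shows "fst \<gamma> \<subseteq> box T" "snd \<gamma> \<subseteq> box T \<times> box T"
proof -
  obtain S where S: "\<forall>ps\<in>S. mp ps \<and> last ps \<in> T" "fst \<gamma> = (\<Union>ps\<in>S. set ps)"
    "snd \<gamma> = (\<Union>ps\<in>S. path_edges ps)" using assms(1) by (rule faceT_E)
  show 1: "fst \<gamma> \<subseteq> box T"
  proof
    fix v assume "v \<in> fst \<gamma>"
    then obtain ps where "ps \<in> S" "v \<in> set ps" using S(2) by auto
    then show "v \<in> box T" using mp_set_box[of ps T] S(1) by auto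
  qed
  show "snd \<gamma> \<subseteq> box T \<times> box T"
  proof
    fix e assume "e \<in> snd \<gamma>"
    then show "e \<in> box T \<times> box T" using face_edge[OF assms, of "fst e" "snd e"] 1 by (auto simp: mem_Times_iff)
  qed
qed

lemma finite_faces: "finite T \<Longrightarrow> finite {\<gamma>. faceT T \<gamma>}"
proof -
  assume fin: "finite T"
  have "{\<gamma>. faceT T \<gamma>} \<subseteq> Pow (box T) \<times> Pow (box T \<times> box T)"
  proof
    fix \<gamma> assume "\<gamma> \<in> {\<gamma>. faceT T \<gamma>}"
    then have "fst \<gamma> \<subseteq> box T" "snd \<gamma> \<subseteq> box T \<times> box T" using face_box by auto
    then show "\<gamma> \<in> Pow (box T) \<times> Pow (box T \<times> box T)" by (simp add: mem_Times_iff)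
  qed
  moreover have "finite (Pow (box T) \<times> Pow (box T \<times> box T))"
    using finite_box[OF fin] by auto
  ultimately show ?thesis by (rule finite_subset)
qed

lemma face_finite: "faceT T \<gamma> \<Longrightarrow> finite T \<Longrightarrow> finite (fst \<gamma>) \<and> finite (snd \<gamma>)"
  using face_box[of T \<gamma>] finite_box[of T] by (meson finite_SigmaI finite_subset)

lemma face_lev:
  assumes "faceT T \<gamma>" "\<forall>t\<in>T. lev t = m" "v \<in> fst \<gamma>"
  shows "lev v \<le> m" "lev v = m \<Longrightarrow> v \<in> T"
proof -
  obtain S where S: "\<forall>ps\<in>S. mp ps \<and> last ps \<in> T" "fst \<gamma> = (\<Union>ps\<in>S. set ps)"
    "snd \<gamma> = (\<Union>ps\<in>S. path_edges ps)" using assms(1) by (rule faceT_E)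
  then obtain ps where ps: "ps \<in> S" "v \<in> set ps" using assms(3) by auto
  have ll: "lev (last ps) = m" using S(1) ps assms(2) by auto
  show "lev v \<le> m" using mp_lev_le[of ps v] ps S ll by auto
  show "v \<in> T" if "lev v = m"
    using mp_lev_last[of ps v] ps S ll that by auto
qed

lemma face_reach:
  assumes "faceT T \<gamma>" "v \<in> fst \<gamma>"
  shows "((0,0), v) \<in> (snd \<gamma>)\<^sup>*"
proof -
  obtain S where S: "\<forall>ps\<in>S. mp ps \<and> last ps \<in> T" "fst \<gamma> = (\<Union>ps\<in>S. set ps)"
    "snd \<gamma> = (\<Union>ps\<in>S. path_edges ps)" using assms(1) by (rule faceT_E)
  then obtain ps where ps: "ps \<in> S" "v \<in> set ps" using assms(2) by auto
  have "((0,0), v) \<in> (path_edges ps)\<^sup>*" using mp_reach[of ps v] ps S by auto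
  moreover have "path_edges ps \<subseteq> snd \<gamma>" using ps S by auto
  ultimately show ?thesis using rtrancl_mono by blast
qed

lemma face_origin:
  assumes "faceT T \<gamma>" "fst \<gamma> \<noteq> {}"
  shows "(0,0) \<in> fst \<gamma>"
proof -
  obtain S where S: "\<forall>ps\<in>S. mp ps \<and> last ps \<in> T" "fst \<gamma> = (\<Union>ps\<in>S. set ps)"
    "snd \<gamma> = (\<Union>ps\<in>S. path_edges ps)" using assms(1) by (rule faceT_E)
  then obtain ps where ps: "ps \<in> S" "ps \<noteq> []" using assms(2) by auto
  then have "hd ps = (0,0)" using S unfolding mp_def by auto
  then show ?thesis using ps S hd_in_set[of ps] by auto
qed

lemma face_pred:
  assumes "faceT T \<gamma>" "v \<in> fst \<gamma>" "v \<noteq> (0,0)"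
  shows "v \<in> snd ` snd \<gamma>"
proof -
  obtain S where S: "\<forall>ps\<in>S. mp ps \<and> last ps \<in> T" "fst \<gamma> = (\<Union>ps\<in>S. set ps)"
    "snd \<gamma> = (\<Union>ps\<in>S. path_edges ps)" using assms(1) by (rule faceT_E)
  then obtain ps where ps: "ps \<in> S" "v \<in> set ps" using assms(2) by auto
  then obtain u where "(u, v) \<in> path_edges ps" using mp_pred[of ps v] S assms(3) by auto
  then show ?thesis using ps S by (auto intro: image_eqI[of v snd "(u, v)"])
qed

lemma face_dim_eq:
  assumes "faceT T \<gamma>" "finite T" "T \<noteq> {}"
  shows "face_dim \<gamma> = card (snd \<gamma>) + 1 - card (fst \<gamma>) \<and> card (fst \<gamma>) \<le> card (snd \<gamma>) + 1"
proof -
  define V where "V = fst \<gamma>"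
  define E where "E = snd \<gamma>"
  have fin: "finite V" "finite E" using face_finite[OF assms(1,2)] by (auto simp: V_def E_def)
  have TV: "T \<subseteq> V" using assms(1) unfolding faceT_def V_def by blast
  then have Vne: "V \<noteq> {}" using assms(3) by auto
  then have o: "(0,0) \<in> V" using face_origin[OF assms(1)] by (simp add: V_def)
  have reach: "((0,0), v) \<in> E\<^sup>*" if "v \<in> V" for v
    using face_reach[OF assms(1)] that by (simp add: V_def E_def)
  have cls: "comp_rel \<gamma> `` {x} = V" if "x \<in> V" for x
  proof (intro set_eqI iffI)
    fix v assume "v \<in> comp_rel \<gamma> `` {x}"
    then show "v \<in> V" unfolding comp_rel_def V_def by auto
  next
    fix v assume v: "v \<in> V"
    have "(x, (0,0)) \<in> (E \<union> E\<inverse>)\<^sup>*"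
    proof -
      have "((0,0), x) \<in> (E \<union> E\<inverse>)\<^sup>*" using reach[OF that] rtrancl_mono[of E "E \<union> E\<inverse>"] by blast
      then have "(x, (0,0)) \<in> ((E \<union> E\<inverse>)\<^sup>*)\<inverse>" by simp
      also have "((E \<union> E\<inverse>)\<^sup>*)\<inverse> = ((E \<union> E\<inverse>)\<inverse>)\<^sup>*" by (rule rtrancl_converse[symmetric])
      also have "(E \<union> E\<inverse>)\<inverse> = E \<union> E\<inverse>" by auto
      finally show ?thesis .
    qed
    moreover have "((0,0), v) \<in> (E \<union> E\<inverse>)\<^sup>*" using reach[OF v] rtrancl_mono[of E "E \<union> E\<inverse>"] by blast
    ultimately have "(x, v) \<in> (E \<union> E\<inverse>)\<^sup>*" by (rule rtrancl_trans)
    then show "v \<in> comp_rel \<gamma> `` {x}" unfolding comp_rel_def using that v by (auto simp: V_def E_def)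
  qed
  have "V // comp_rel \<gamma> = {V}"
    unfolding quotient_def using cls Vne by auto
  then have c1: "card (V // comp_rel \<gamma>) = 1" by simp
  have "V - {(0,0)} \<subseteq> snd ` E"
    using face_pred[OF assms(1)] by (auto simp: V_def E_def)
  then have "card (V - {(0,0)}) \<le> card (snd ` E)" using fin by (intro card_mono) auto
  also have "\<dots> \<le> card E" using fin(2) by (rule card_image_le)
  finally have "card V \<le> card E + 1" using o fin by (simp add: card_Diff_singleton)
  then show ?thesis using c1 unfolding face_dim_def V_def E_def by simp
qed

definition inE :: "vert set \<Rightarrow> (vert \<times> vert) set" where
  "inE T = {(u, v). v \<in> T \<and> Qplus_edge u v}"

definition Adm :: "vert set \<Rightarrow> (vert \<times> vert) set set" where
  "Adm T = {Ein. Ein \<subseteq> inE T \<and> (\<forall>t\<in>T. \<exists>u. (u, t) \<in> Ein)}"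

definition res :: "nat \<Rightarrow> vert set \<times> (vert \<times> vert) set
    \<Rightarrow> (vert \<times> vert) set \<times> (vert set \<times> (vert \<times> vert) set)" where
  "res m \<gamma> = ({e \<in> snd \<gamma>. lev (snd e) = m}, ({v \<in> fst \<gamma>. lev v < m}, {e \<in> snd \<gamma>. lev (snd e) < m}))"

definition ext :: "(vert \<times> vert) set \<times> (vert set \<times> (vert \<times> vert) set)
    \<Rightarrow> vert set \<times> (vert \<times> vert) set" where
  "ext p = (fst (snd p) \<union> snd ` fst p, snd (snd p) \<union> fst p)"

lemma finite_inE: "finite T \<Longrightarrow> finite (inE T)"
proof -
  assume fin: "finite T"
  have "inE T \<subseteq> box T \<times> T"
  proof
    fix e assume "e \<in> inE T"
    then obtain u v where e: "e = (u, v)" "v \<in> T" "Qplus_edge u v" unfolding inE_def by auto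
    then have "u \<in> box T" using qplus_le[OF e(3)] box_mono_pt[of "fst v" "snd v" T "fst u" "snd u"] by auto
    then show "e \<in> box T \<times> T" using e by auto
  qed
  then show ?thesis using finite_box[OF fin] fin by (meson finite_SigmaI finite_subset)
qed

lemma finite_Adm: "finite T \<Longrightarrow> finite (Adm T)"
proof -
  assume "finite T"
  then have "Adm T \<subseteq> Pow (inE T)" "finite (Pow (inE T))" using finite_inE unfolding Adm_def by auto
  then show ?thesis by (rule finite_subset)
qed

lemma path_split:
  assumes "mp ps" "lev (last ps) = m" "0 < m"
  shows "butlast ps \<noteq> []" "mp (butlast ps)" "lev (last (butlast ps)) = m - 1"
    "set ps = insert (last ps) (set (butlast ps))" "\<forall>v\<in>set (butlast ps). lev v < m"
    "path_edges ps = insert (last (butlast ps), last ps) (path_edges (butlast ps))"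
proof -
  have len: "length ps = Suc m" using mp_last_lev[OF assms(1)] assms(1,2) unfolding mp_def by (cases ps) auto
  then show bne: "butlast ps \<noteq> []" using assms(3) by (cases ps) auto
  show mpb: "mp (butlast ps)" using mp_butlast[OF assms(1)] len assms(3) by simp
  show lb: "lev (last (butlast ps)) = m - 1" using mp_last_lev[OF mpb] len by simp
  have ps: "ps = butlast ps @ [last ps]" using assms(1) unfolding mp_def by simp
  show "set ps = insert (last ps) (set (butlast ps))" by (subst ps) simp
  show "\<forall>v\<in>set (butlast ps). lev v < m" using mp_lev_le[OF mpb] lb assms(3) by fastforce
  show "path_edges ps = insert (last (butlast ps), last ps) (path_edges (butlast ps))"
    by (subst ps, rule path_edges_snoc[OF bne])
qed

lemma res_face:
  assumes F: "faceT T \<gamma>" and L: "\<forall>t\<in>T. lev t = m" and m: "0 < m"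
  shows "fst (res m \<gamma>) \<in> Adm T" "faceT (fst ` fst (res m \<gamma>)) (snd (res m \<gamma>))"
proof -
  obtain S where S: "\<forall>ps\<in>S. mp ps \<and> last ps \<in> T" "fst \<gamma> = (\<Union>ps\<in>S. set ps)"
    "snd \<gamma> = (\<Union>ps\<in>S. path_edges ps)" "T \<subseteq> fst \<gamma>" using F by (rule faceT_E)
  define Ein where "Ein = {e \<in> snd \<gamma>. lev (snd e) = m}"
  have SP: "\<And>ps. ps \<in> S \<Longrightarrow> mp ps \<and> lev (last ps) = m" using S(1) L by auto
  have "Ein \<subseteq> inE T"
  proof
    fix e assume e: "e \<in> Ein"
    obtain u v where uv: "e = (u, v)" by (cases e)
    have "v \<in> fst \<gamma>" "Qplus_edge u v" using face_edge[OF F, of u v] e uv Ein_def by auto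
    moreover have "lev v = m" using e uv Ein_def by auto
    ultimately show "e \<in> inE T" using face_lev(2)[OF F L] uv unfolding inE_def by auto
  qed
  moreover have "\<forall>t\<in>T. \<exists>u. (u, t) \<in> Ein"
  proof
    fix t assume t: "t \<in> T"
    then obtain ps where ps: "ps \<in> S" "t \<in> set ps" using S(2,4) by auto
    have tl: "t = last ps" using mp_lev_last[of ps t] SP[OF ps(1)] ps(2) L t by auto
    have "(last (butlast ps), last ps) \<in> path_edges ps" using path_split(6)[of ps m] SP[OF ps(1)] m by auto
    then have "(last (butlast ps), t) \<in> Ein" unfolding Ein_def using S(3) ps(1) tl L t by auto
    then show "\<exists>u. (u, t) \<in> Ein" by blast
  qed
  ultimately show adm: "fst (res m \<gamma>) \<in> Adm T" unfolding Adm_def res_def Ein_def by simp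
  show "faceT (fst ` fst (res m \<gamma>)) (snd (res m \<gamma>))"
    unfolding faceT_def
  proof (intro conjI exI[of _ "butlast ` S"])
    show "\<forall>ps\<in>butlast ` S. mp ps \<and> last ps \<in> fst ` fst (res m \<gamma>)"
    proof
      fix qs assume "qs \<in> butlast ` S"
      then obtain ps where ps: "ps \<in> S" "qs = butlast ps" by auto
      have "(last (butlast ps), last ps) \<in> path_edges ps" using path_split(6)[of ps m] SP[OF ps(1)] m by auto
      then have "(last (butlast ps), last ps) \<in> fst (res m \<gamma>)" unfolding res_def using S(3) ps(1) SP[OF ps(1)] by auto
      then have "last qs \<in> fst ` fst (res m \<gamma>)" using ps(2) by force
      then show "mp qs \<and> last qs \<in> fst ` fst (res m \<gamma>)" using path_split(2)[of ps m] SP[OF ps(1)] m ps(2) by auto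
    qed
    show "fst (snd (res m \<gamma>)) = (\<Union>ps\<in>butlast ` S. set ps)"
    proof (intro set_eqI iffI)
      fix v assume "v \<in> fst (snd (res m \<gamma>))"
      then have v: "v \<in> fst \<gamma>" "lev v < m" unfolding res_def by auto
      then obtain ps where ps: "ps \<in> S" "v \<in> set ps" using S(2) by auto
      have "v \<noteq> last ps" using v SP[OF ps(1)] by auto
      then have "v \<in> set (butlast ps)" using path_split(4)[of ps m] SP[OF ps(1)] m ps(2) by auto
      then show "v \<in> (\<Union>ps\<in>butlast ` S. set ps)" using ps(1) by auto
    next
      fix v assume "v \<in> (\<Union>ps\<in>butlast ` S. set ps)"
      then obtain ps where ps: "ps \<in> S" "v \<in> set (butlast ps)" by auto
      then have "v \<in> set ps" "lev v < m" using path_split(4,5)[of ps m] SP[OF ps(1)] m by auto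
      then show "v \<in> fst (snd (res m \<gamma>))" unfolding res_def using S(2) ps(1) by auto
    qed
    show "snd (snd (res m \<gamma>)) = (\<Union>ps\<in>butlast ` S. path_edges ps)"
    proof (intro set_eqI iffI)
      fix e assume "e \<in> snd (snd (res m \<gamma>))"
      then have e: "e \<in> snd \<gamma>" "lev (snd e) < m" unfolding res_def by auto
      then obtain ps where ps: "ps \<in> S" "e \<in> path_edges ps" using S(3) by auto
      have "e \<noteq> (last (butlast ps), last ps)" using e SP[OF ps(1)] by auto
      then have "e \<in> path_edges (butlast ps)" using path_split(6)[of ps m] SP[OF ps(1)] m ps(2) by auto
      then show "e \<in> (\<Union>ps\<in>butlast ` S. path_edges ps)" using ps(1) by auto
    next
      fix e assume "e \<in> (\<Union>ps\<in>butlast ` S. path_edges ps)"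
      then obtain ps where ps: "ps \<in> S" "e \<in> path_edges (butlast ps)" by auto
      then have "e \<in> path_edges ps" using path_split(6)[of ps m] SP[OF ps(1)] m by auto
      moreover have "snd e \<in> set (butlast ps)" using ps(2) path_edges_subset by (cases e) auto
      then have "lev (snd e) < m" using path_split(5)[of ps m] SP[OF ps(1)] m by auto
      ultimately show "e \<in> snd (snd (res m \<gamma>))" unfolding res_def using S(3) ps(1) by auto
    qed
    show "fst ` fst (res m \<gamma>) \<subseteq> fst (snd (res m \<gamma>))"
    proof
      fix u assume "u \<in> fst ` fst (res m \<gamma>)"
      then obtain v where uv: "(u, v) \<in> snd \<gamma>" "lev v = m" unfolding res_def by auto
      then have "u \<in> fst \<gamma>" "Qplus_edge u v" using face_edge[OF F] by auto
      then show "u \<in> fst (snd (res m \<gamma>))" using qplus_lev uv(2) m unfolding res_def by auto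
    qed
  qed
qed

lemma Adm_snd: "Ein \<in> Adm T \<Longrightarrow> snd ` Ein = T"
  unfolding Adm_def inE_def by force

lemma ext_res:
  assumes F: "faceT T \<gamma>" and L: "\<forall>t\<in>T. lev t = m" and m: "0 < m"
  shows "ext (res m \<gamma>) = \<gamma>"
proof -
  have sn: "snd ` fst (res m \<gamma>) = T" using Adm_snd res_face(1)[OF assms] by blast
  have "fst (ext (res m \<gamma>)) = fst \<gamma>"
  proof -
    have "T \<subseteq> fst \<gamma>" using F unfolding faceT_def by blast
    moreover have "v \<in> T" if "v \<in> fst \<gamma>" "\<not> lev v < m" for v
      using face_lev[OF F L that(1)] that(2) by auto
    ultimately show ?thesis unfolding ext_def using sn by (auto simp: res_def)
  qed
  moreover have "snd (ext (res m \<gamma>)) = snd \<gamma>"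
  proof -
    have "lev (snd e) \<le> m" if "e \<in> snd \<gamma>" for e
      using face_edge[OF F, of "fst e" "snd e"] that face_lev(1)[OF F L] by auto
    then show ?thesis unfolding ext_def res_def by force
  qed
  ultimately show ?thesis by (simp add: prod_eq_iff)
qed

lemma ext_face:
  assumes A: "Ein \<in> Adm T" and F': "faceT (fst ` Ein) \<gamma>'" and L: "\<forall>t\<in>T. lev t = m" and m: "0 < m"
  shows "faceT T (ext (Ein, \<gamma>'))" "res m (ext (Ein, \<gamma>')) = (Ein, \<gamma>')"
proof -
  define T' where "T' = fst ` Ein"
  have EinT: "\<And>u v. (u, v) \<in> Ein \<Longrightarrow> v \<in> T \<and> Qplus_edge u v" using A unfolding Adm_def inE_def by auto
  have cov: "\<And>t. t \<in> T \<Longrightarrow> \<exists>u. (u, t) \<in> Ein" using A unfolding Adm_def by auto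
  have LT': "\<forall>u\<in>T'. lev u = m - 1"
  proof
    fix u assume "u \<in> T'"
    then obtain v where "(u, v) \<in> Ein" unfolding T'_def by auto
    then show "lev u = m - 1" using EinT qplus_lev L by fastforce
  qed
  obtain S' where S': "\<forall>ps\<in>S'. mp ps \<and> last ps \<in> T'" "fst \<gamma>' = (\<Union>ps\<in>S'. set ps)"
    "snd \<gamma>' = (\<Union>ps\<in>S'. path_edges ps)" "T' \<subseteq> fst \<gamma>'" using F' unfolding T'_def by (rule faceT_E)
  have onlast: "w = last ps" if "w \<in> T'" "ps \<in> S'" "w \<in> set ps" for w ps
    using mp_lev_last[of ps w] S'(1) that LT' by auto
  define S where "S = (\<Union>ps\<in>S'. {ps @ [v] | v. (last ps, v) \<in> Ein})"
  have inS: "ps @ [v] \<in> S" if "ps \<in> S'" "(last ps, v) \<in> Ein" for ps v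
    using that unfolding S_def by blast
  have lastT': "last ps \<in> fst ` Ein" if "ps \<in> S'" for ps
    using S'(1) that unfolding T'_def by blast
  have ext_fst: "fst (ext (Ein, \<gamma>')) = (\<Union>ps\<in>S. set ps)"
  proof (intro set_eqI iffI)
    fix w assume "w \<in> fst (ext (Ein, \<gamma>'))"
    then consider "w \<in> fst \<gamma>'" | "w \<in> snd ` Ein" unfolding ext_def by auto
    then show "w \<in> (\<Union>ps\<in>S. set ps)"
    proof cases
      case 1
      then obtain ps where ps: "ps \<in> S'" "w \<in> set ps" using S'(2) by auto
      then obtain v where "(last ps, v) \<in> Ein" using lastT'[OF ps(1)] by force
      then have "ps @ [v] \<in> S" using inS ps(1) by blast
      moreover have "w \<in> set (ps @ [v])" using ps(2) by simp
      ultimately show ?thesis by blast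
    next
      case 2
      then obtain u where u: "(u, w) \<in> Ein" by auto
      then have "u \<in> T'" unfolding T'_def by force
      then obtain ps where ps: "ps \<in> S'" "u \<in> set ps" using S'(2,4) by auto
      then have "u = last ps" using onlast \<open>u \<in> T'\<close> by auto
      then have "ps @ [w] \<in> S" using inS ps(1) u by blast
      moreover have "w \<in> set (ps @ [w])" by simp
      ultimately show ?thesis by blast
    qed
  next
    fix w assume "w \<in> (\<Union>ps\<in>S. set ps)"
    then obtain ps v where "ps \<in> S'" "(last ps, v) \<in> Ein" "w \<in> set (ps @ [v])" unfolding S_def by blast
    then show "w \<in> fst (ext (Ein, \<gamma>'))" unfolding ext_def using S'(2) by force
  qed
  have ext_snd: "snd (ext (Ein, \<gamma>')) = (\<Union>ps\<in>S. path_edges ps)"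
  proof (intro set_eqI iffI)
    fix e assume "e \<in> snd (ext (Ein, \<gamma>'))"
    then consider "e \<in> snd \<gamma>'" | "e \<in> Ein" unfolding ext_def by auto
    then show "e \<in> (\<Union>ps\<in>S. path_edges ps)"
    proof cases
      case 1
      then obtain ps where ps: "ps \<in> S'" "e \<in> path_edges ps" using S'(3) by auto
      then obtain v where v: "(last ps, v) \<in> Ein" using lastT'[OF ps(1)] by force
      have "ps \<noteq> []" using S'(1) ps unfolding mp_def by auto
      then have "e \<in> path_edges (ps @ [v])" using ps path_edges_snoc by auto
      then show ?thesis using ps v inS[of ps v] by blast
    next
      case 2
      obtain u w where e: "e = (u, w)" by (cases e)
      then have "u \<in> T'" unfolding T'_def using 2 by force
      then obtain ps where ps: "ps \<in> S'" "u \<in> set ps" using S'(2,4) by auto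
      then have ul: "u = last ps" using onlast \<open>u \<in> T'\<close> by auto
      have "ps \<noteq> []" using S'(1) ps unfolding mp_def by auto
      then have "e \<in> path_edges (ps @ [w])" using ul e path_edges_snoc by auto
      then show ?thesis using ps 2 e ul inS[of ps w] by blast
    qed
  next
    fix e assume "e \<in> (\<Union>ps\<in>S. path_edges ps)"
    then obtain ps v where ps: "ps \<in> S'" "(last ps, v) \<in> Ein" "e \<in> path_edges (ps @ [v])" unfolding S_def by blast
    have "ps \<noteq> []" using S'(1) ps unfolding mp_def by auto
    then have "e \<in> path_edges ps \<or> e = (last ps, v)" using ps(3) path_edges_snoc by auto
    then show "e \<in> snd (ext (Ein, \<gamma>'))" unfolding ext_def using S'(3) ps by auto
  qed
  have Smp: "\<forall>ps\<in>S. mp ps \<and> last ps \<in> T"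
  proof
    fix qs assume "qs \<in> S"
    then obtain ps v where ps: "ps \<in> S'" "(last ps, v) \<in> Ein" "qs = ps @ [v]" unfolding S_def by blast
    then show "mp qs \<and> last qs \<in> T" using mp_snoc[of ps v] S'(1) EinT[OF ps(2)] by auto
  qed
  have "T \<subseteq> fst (ext (Ein, \<gamma>'))" using cov unfolding ext_def by force
  then show "faceT T (ext (Ein, \<gamma>'))" unfolding faceT_def using Smp ext_fst ext_snd by blast
  have levV': "lev v \<le> m - 1" if "v \<in> fst \<gamma>'" for v using face_lev(1)[OF F'[folded T'_def] LT' that] .
  have levE': "lev (snd e) \<le> m - 1" if "e \<in> snd \<gamma>'" for e
    using face_edge[OF F', of "fst e" "snd e"] that levV' by auto
  have levT: "lev (snd e) = m" if "e \<in> Ein" for e using that EinT[of "fst e" "snd e"] L by auto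
  have r1: "{e \<in> snd (ext (Ein, \<gamma>')). lev (snd e) = m} = Ein"
    unfolding ext_def using levE' levT m by fastforce
  have r2: "{v \<in> fst (ext (Ein, \<gamma>')). lev v < m} = fst \<gamma>'"
    unfolding ext_def using levV' levT m by fastforce
  have r3: "{e \<in> snd (ext (Ein, \<gamma>')). lev (snd e) < m} = snd \<gamma>'"
    unfolding ext_def using levE' levT m by fastforce
  show "res m (ext (Ein, \<gamma>')) = (Ein, \<gamma>')" unfolding res_def using r1 r2 r3 by simp
qed

lemma dim_res:
  assumes F: "faceT T \<gamma>" and L: "\<forall>t\<in>T. lev t = m" and m: "0 < m" and fin: "finite T" and ne: "T \<noteq> {}"
  shows "face_dim \<gamma> = face_dim (snd (res m \<gamma>)) + (card (fst (res m \<gamma>)) - card T)"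
proof -
  define Ein where "Ein = fst (res m \<gamma>)"
  define g where "g = snd (res m \<gamma>)"
  have adm: "Ein \<in> Adm T" using res_face(1)[OF assms(1-3)] by (simp add: Ein_def)
  have F': "faceT (fst ` Ein) g" using res_face(2)[OF assms(1-3)] by (simp add: Ein_def g_def)
  have sn: "snd ` Ein = T" using Adm_snd[OF adm] .
  have fE: "finite (snd \<gamma>)" "finite (fst \<gamma>)" using face_finite[OF F fin] by auto
  have finEin: "finite Ein" using fE unfolding Ein_def res_def by simp
  have neT': "fst ` Ein \<noteq> {}" using sn ne by auto
  have d': "face_dim g = card (snd g) + 1 - card (fst g) \<and> card (fst g) \<le> card (snd g) + 1"
    using face_dim_eq[OF F' _ neT'] finEin by simp
  have d: "face_dim \<gamma> = card (snd \<gamma>) + 1 - card (fst \<gamma>)" using face_dim_eq[OF F fin ne] by simp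
  have er: "ext (Ein, g) = \<gamma>" using ext_res[OF assms(1-3)] by (simp add: Ein_def g_def)
  have levg: "lev v < m" if "v \<in> fst g" for v using that unfolding g_def res_def by auto
  have levge: "lev (snd e) < m" if "e \<in> snd g" for e using that unfolding g_def res_def by auto
  have levE: "lev (snd e) = m" if "e \<in> Ein" for e using that unfolding Ein_def res_def by auto
  have fing: "finite (fst g)" "finite (snd g)" using fE unfolding g_def res_def by auto
  have "snd (ext (Ein, g)) = snd g \<union> Ein" by (simp add: ext_def)
  then have "card (snd \<gamma>) = card (snd g \<union> Ein)" using er by simp
  also have "\<dots> = card (snd g) + card Ein"
    using levge levE fing finEin by (intro card_Un_disjoint) force+
  finally have c1: "card (snd \<gamma>) = card (snd g) + card Ein" .
  have "fst (ext (Ein, g)) = fst g \<union> T" using sn by (simp add: ext_def)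
  then have "card (fst \<gamma>) = card (fst g \<union> T)" using er by simp
  also have "\<dots> = card (fst g) + card T"
    using levg L fing fin by (intro card_Un_disjoint) force+
  finally have c2: "card (fst \<gamma>) = card (fst g) + card T" .
  have "card T \<le> card Ein" using sn card_image_le[OF finEin, of snd] by simp
  then show ?thesis using d d' c1 c2 unfolding Ein_def[symmetric] g_def[symmetric] by simp
qed

lemma fT_decomp:
  assumes L: "\<forall>t\<in>T. lev t = m" and m: "0 < m" and fin: "finite T" and ne: "T \<noteq> {}"
  shows "fT T = (\<Sum>Ein\<in>Adm T. monom 1 (card Ein - card T) * fT (fst ` Ein))"
proof -
  define A where "A = (SIGMA Ein:Adm T. {\<gamma>'. faceT (fst ` Ein) \<gamma>'})"
  have bij: "bij_betw ext A {\<gamma>. faceT T \<gamma>}"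
  proof (rule bij_betw_byWitness[where f' = "res m"])
    show "\<forall>a\<in>A. res m (ext a) = a" unfolding A_def using ext_face(2)[OF _ _ L m] by auto
    show "\<forall>a'\<in>{\<gamma>. faceT T \<gamma>}. ext (res m a') = a'" using ext_res[OF _ L m] by auto
    show "ext ` A \<subseteq> {\<gamma>. faceT T \<gamma>}" unfolding A_def using ext_face(1)[OF _ _ L m] by auto
    show "res m ` {\<gamma>. faceT T \<gamma>} \<subseteq> A"
    proof
      fix p assume "p \<in> res m ` {\<gamma>. faceT T \<gamma>}"
      then obtain \<gamma> where "faceT T \<gamma>" "p = res m \<gamma>" by auto
      then have "fst p \<in> Adm T" "snd p \<in> {\<gamma>'. faceT (fst ` fst p) \<gamma>'}" using res_face[OF _ L m, of \<gamma>] by auto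
      then show "p \<in> A" unfolding A_def by (metis SigmaI prod.collapse)
    qed
  qed
  have finA: "finite (Adm T)" using finite_Adm[OF fin] .
  have finB: "\<forall>Ein\<in>Adm T. finite {\<gamma>'. faceT (fst ` Ein) \<gamma>'}"
  proof
    fix Ein assume "Ein \<in> Adm T"
    then have "Ein \<subseteq> inE T" unfolding Adm_def by auto
    then have "finite Ein" using finite_inE[OF fin] finite_subset by blast
    then show "finite {\<gamma>'. faceT (fst ` Ein) \<gamma>'}" by (intro finite_faces) simp
  qed
  have "fT T = (\<Sum>p\<in>A. monom 1 (face_dim (ext p)))"
    unfolding fT_def by (rule sum.reindex_bij_betw[OF bij, symmetric])
  also have "\<dots> = (\<Sum>p\<in>A. monom 1 (card (fst p) - card T) * monom 1 (face_dim (snd p)))"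
  proof (rule sum.cong[OF refl])
    fix p assume p: "p \<in> A"
    then have fp: "faceT T (ext p)" "res m (ext p) = p"
      unfolding A_def using ext_face[OF _ _ L m, of "fst p" "snd p"] by auto
    have "face_dim (ext p) = face_dim (snd p) + (card (fst p) - card T)"
      using dim_res[OF fp(1) L m fin ne] fp(2) by simp
    then show "(monom 1 (face_dim (ext p)) :: int poly) = monom 1 (card (fst p) - card T) * monom 1 (face_dim (snd p))"
      by (simp add: mult_monom add.commute)
  qed
  also have "\<dots> = (\<Sum>Ein\<in>Adm T. \<Sum>\<gamma>'\<in>{\<gamma>'. faceT (fst ` Ein) \<gamma>'}.
                    monom 1 (card Ein - card T) * monom 1 (face_dim \<gamma>'))"
    unfolding A_def by (subst sum.Sigma[OF finA finB]) (simp add: case_prod_beta)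
  also have "\<dots> = (\<Sum>Ein\<in>Adm T. monom 1 (card Ein - card T) * fT (fst ` Ein))"
    unfolding fT_def by (simp add: sum_distrib_left)
  finally show ?thesis .
qed

definition inc :: "nat \<Rightarrow> nat list \<Rightarrow> nat list" where "inc p k = k[p := Suc (k ! p)]"

definition EE :: "(nat list \<Rightarrow> rat poly) \<Rightarrow> nat list \<Rightarrow> rat poly" where
  "EE g k = smult (inverse (of_nat (prod_list (map fact k)))) (g k)"

definition agree :: "nat \<Rightarrow> mser \<Rightarrow> mser \<Rightarrow> bool" where
  "agree M f g \<longleftrightarrow> (\<forall>k. length k = M \<longrightarrow> f k = g k)"

lemma length_inc[simp]: "length (inc p k) = length k"
  by (simp add: inc_def)

lemma prod_fact_inc:
  "p < length k \<Longrightarrow> (prod_list (map fact (inc p k)) :: nat) = Suc (k ! p) * prod_list (map fact k)"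
proof (induction k arbitrary: p)
  case Nil then show ?case by simp
next
  case (Cons x k)
  show ?case
  proof (cases p)
    case 0 then show ?thesis by (simp add: inc_def algebra_simps)
  next
    case (Suc p')
    then have "p' < length k" using Cons.prems by simp
    then show ?thesis using Cons.IH[of p'] Suc by (simp add: inc_def algebra_simps)
  qed
qed

lemma prod_fact_pos: "(0::nat) < prod_list (map fact (k :: nat list))"
  by (induction k) auto

lemma pd_agree:
  assumes "agree M f (EE g)" "p < M" "length k = M"
  shows "pd p f k = EE (\<lambda>k. g (inc p k)) k"
proof -
  define a where "a = Suc (k ! p)"
  define P :: nat where "P = prod_list (map fact k)"
  have P0: "(of_nat P :: rat) > 0" using prod_fact_pos[of k] unfolding P_def by simp
  have "pd p f k = smult (of_nat a) (f (inc p k))" unfolding pd_def inc_def a_def by simp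
  also have "f (inc p k) = EE g (inc p k)" using assms unfolding agree_def by simp
  also have "\<dots> = smult (inverse (of_nat (a * P))) (g (inc p k))"
    unfolding EE_def using prod_fact_inc[of p k] assms(2,3) by (simp add: a_def P_def)
  finally have "pd p f k = smult (of_nat a * inverse (of_nat (a * P))) (g (inc p k))" by simp
  also have "(of_nat a :: rat) * inverse (of_nat (a * P)) = inverse (of_nat P)"
  proof -
    have a0: "(of_nat a :: rat) \<noteq> 0" unfolding a_def by (metis of_nat_eq_0_iff nat.simps(3))
    show ?thesis using a0 by (simp add: inverse_mult_distrib mult.assoc[symmetric])
  qed
  finally show ?thesis unfolding EE_def P_def by simp
qed

definition fo' :: "nat \<Rightarrow> mser \<Rightarrow> mser" where
  "fo' j g = (\<lambda>k. g (inc (2 * j) k) + g (inc (2 * j + 2) k) + [:0, 1:] * g (inc (2 * j + 1) k))"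

lemma factor_agree:
  assumes "agree M f (EE g)" "2 * j + 2 < M"
  shows "agree M (factor_op j f) (EE (fo' j g))"
  unfolding agree_def
proof (intro allI impI)
  fix k :: "nat list" assume k: "length k = M"
  have "factor_op j f k = pd (2 * j) f k + pd (2 * j + 2) f k + [:0, 1:] * pd (2 * j + 1) f k"
    unfolding factor_op_def by simp
  also have "\<dots> = EE (\<lambda>k. g (inc (2 * j) k)) k + EE (\<lambda>k. g (inc (2 * j + 2) k)) k
      + [:0, 1:] * EE (\<lambda>k. g (inc (2 * j + 1) k)) k"
    using pd_agree[OF assms(1) _ k] assms(2) by simp
  also have "\<dots> = EE (fo' j g) k"
    unfolding EE_def fo'_def by (simp add: smult_add_right mult_smult_right)
  finally show "factor_op j f k = EE (fo' j g) k" .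
qed

lemma Pop_agree:
  "agree M f (EE g) \<Longrightarrow> (\<forall>j\<in>set js. 2 * j + 2 < M) \<Longrightarrow> agree M (fold factor_op js f) (EE (fold fo' js g))"
proof (induction js arbitrary: f g)
  case Nil then show ?case by simp
next
  case (Cons j js)
  then show ?case using factor_agree[OF Cons.prems(1), of j] by simp
qed

lemma Dx_agree:
  "agree M f (EE g) \<Longrightarrow> (\<forall>i\<in>set js. 2 * i < M) \<Longrightarrow>
    agree M (fold (\<lambda>i g. pd (2 * i) g) js f) (EE (fold (\<lambda>i g k. g (inc (2 * i) k)) js g))"
proof (induction js arbitrary: f g)
  case Nil then show ?case by simp
next
  case (Cons i js)
  have "agree M (pd (2 * i) f) (EE (\<lambda>k. g (inc (2 * i) k)))"
    unfolding agree_def using pd_agree[OF Cons.prems(1)] Cons.prems(2) by simp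
  then show ?case using Cons by simp
qed

definition Kv :: "(nat \<Rightarrow> nat) \<Rightarrow> nat list \<Rightarrow> nat list" where
  "Kv v K = map (\<lambda>q. K ! q + v q) [0..<length K]"

lemma length_Kv[simp]: "length (Kv v K) = length K"
  by (simp add: Kv_def)

lemma Kv_inc: "p < length K \<Longrightarrow> Kv v (inc p K) = Kv (\<lambda>q. v q + (if q = p then 1 else 0)) K"
  by (rule nth_equalityI) (auto simp: Kv_def inc_def nth_list_update)

lemma Kv_zero: "Kv (\<lambda>_. 0) K = K"
  by (rule nth_equalityI) (auto simp: Kv_def)

lemma Dx_expand:
  "2 * n \<le> Suc (length K) \<Longrightarrow>
   fold (\<lambda>i g k. g (inc (2 * i) k)) [0..<n] g K = g (Kv (\<lambda>q. if even q \<and> q < 2 * n then 1 else 0) K)"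
proof (induction n arbitrary: K)
  case 0 then show ?case by (simp add: Kv_zero)
next
  case (Suc n)
  have p: "2 * n < length K" using Suc.prems by simp
  have "fold (\<lambda>i g k. g (inc (2 * i) k)) [0..<Suc n] g K
      = fold (\<lambda>i g k. g (inc (2 * i) k)) [0..<n] g (inc (2 * n) K)" by simp
  also have "\<dots> = g (Kv (\<lambda>q. if even q \<and> q < 2 * n then 1 else 0) (inc (2 * n) K))"
    using Suc.IH[of "inc (2 * n) K"] Suc.prems by simp
  also have "Kv (\<lambda>q. if even q \<and> q < 2 * n then 1 else 0) (inc (2 * n) K)
      = Kv (\<lambda>q. if even q \<and> q < 2 * Suc n then 1 else 0) K"
    unfolding Kv_inc[OF p] by (rule arg_cong[where f = "\<lambda>v. Kv v K"]) (auto simp: fun_eq_iff)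
  finally show ?case .
qed

definition pos :: "nat \<Rightarrow> nat \<Rightarrow> nat" where
  "pos j d = (if d = 0 then 2 * j else if d = 1 then 2 * j + 2 else 2 * j + 1)"

definition cnt :: "nat list \<Rightarrow> nat \<Rightarrow> nat" where
  "cnt c q = card {j. j < length c \<and> pos j (c ! j) = q}"

definition ny :: "nat list \<Rightarrow> nat" where
  "ny c = length (filter (\<lambda>d. d = 2) c)"

definition CC :: "nat \<Rightarrow> nat list set" where
  "CC n = {c. set c \<subseteq> {0, 1, 2} \<and> length c = n}"

lemma finite_CC: "finite (CC n)"
  unfolding CC_def by (rule finite_lists_length_eq) simp

lemma CC_0: "CC 0 = {[]}"
  by (auto simp: CC_def)

lemma CC_Suc: "CC (Suc n) = (\<lambda>(c, d). c @ [d]) ` (CC n \<times> {0, 1, 2})"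
proof (intro set_eqI iffI)
  fix c' assume c': "c' \<in> CC (Suc n)"
  then have ne: "c' \<noteq> []" by (auto simp: CC_def)
  then have eq: "c' = butlast c' @ [last c']" by simp
  have s: "set c' \<subseteq> {0, 1, 2}" "length c' = Suc n" using c' by (auto simp: CC_def)
  have "set (butlast c') \<subseteq> {0, 1, 2}" using s(1) in_set_butlastD by fast
  then have "butlast c' \<in> CC n" unfolding CC_def using s(2) by simp
  moreover have "last c' \<in> {0, 1, 2}" using s(1) ne last_in_set by blast
  ultimately have "(butlast c', last c') \<in> CC n \<times> {0, 1, 2}" by simp
  moreover have "c' = (\<lambda>(c, d). c @ [d]) (butlast c', last c')" using eq by simp
  ultimately show "c' \<in> (\<lambda>(c, d). c @ [d]) ` (CC n \<times> {0, 1, 2})" by (rule rev_image_eqI)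
next
  fix c' assume "c' \<in> (\<lambda>(c, d). c @ [d]) ` (CC n \<times> {0, 1, 2})"
  then show "c' \<in> CC (Suc n)" by (auto simp: CC_def)
qed

lemma inj_snoc: "inj_on (\<lambda>(c, d). c @ [d]) A"
  by (auto simp: inj_on_def)

lemma cnt_Nil: "cnt [] = (\<lambda>_. 0)"
  by (simp add: cnt_def fun_eq_iff)

lemma cnt_snoc: "cnt (c @ [d]) q = cnt c q + (if q = pos (length c) d then 1 else 0)"
proof -
  have "{j. j < length (c @ [d]) \<and> pos j ((c @ [d]) ! j) = q}
      = {j. j < length c \<and> pos j (c ! j) = q} \<union> (if q = pos (length c) d then {length c} else {})"
    by (auto simp: nth_append less_Suc_eq)
  then show ?thesis unfolding cnt_def by (simp add: card_insert_if)
qed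

lemma ny_snoc: "ny (c @ [d]) = ny c + (if d = 2 then 1 else 0)"
  by (simp add: ny_def)

lemma Pop_expand:
  "(n = 0 \<or> 2 * n < length K) \<Longrightarrow>
   fold fo' [0..<n] g K = (\<Sum>c\<in>CC n. [:0, 1:] ^ ny c * g (Kv (cnt c) K))"
proof (induction n arbitrary: K)
  case 0 then show ?case by (simp add: CC_0 cnt_Nil Kv_zero ny_def)
next
  case (Suc n)
  have p: "2 * n + 2 < length K" using Suc.prems by simp
  define h where "h = fold fo' [0..<n] g"
  have IH: "h (inc p K) = (\<Sum>c\<in>CC n. [:0, 1:] ^ ny c * g (Kv (\<lambda>q. cnt c q + (if q = p then 1 else 0)) K))"
    if "p < length K" for p
    using Suc.IH[of "inc p K"] p that unfolding h_def by (simp add: Kv_inc)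
  have "fold fo' [0..<Suc n] g K = fo' n h K" by (simp add: h_def)
  also have "\<dots> = h (inc (2 * n) K) + h (inc (2 * n + 2) K) + [:0, 1:] * h (inc (2 * n + 1) K)"
    by (simp add: fo'_def)
  also have "\<dots> = (\<Sum>c\<in>CC n. \<Sum>d\<in>{0, 1, 2}. [:0, 1:] ^ ny (c @ [d]) * g (Kv (cnt (c @ [d])) K))"
  proof -
    have cn: "length c = n \<Longrightarrow> cnt (c @ [d]) = (\<lambda>q. cnt c q + (if q = pos n d then 1 else 0))" for c d
      using cnt_snoc[of c d] by auto
    have "(\<Sum>c\<in>CC n. \<Sum>d\<in>{0, 1, 2::nat}. [:0, 1:] ^ ny (c @ [d]) * g (Kv (cnt (c @ [d])) K))
       = (\<Sum>c\<in>CC n. [:0, 1:] ^ ny c * g (Kv (\<lambda>q. cnt c q + (if q = 2 * n then 1 else 0)) K)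
          + [:0, 1:] ^ ny c * g (Kv (\<lambda>q. cnt c q + (if q = 2 * n + 2 then 1 else 0)) K)
          + [:0, 1:] * ([:0, 1:] ^ ny c * g (Kv (\<lambda>q. cnt c q + (if q = 2 * n + 1 then 1 else 0)) K)))"
    proof (rule sum.cong[OF refl])
      fix c assume "c \<in> CC n"
      then have lc: "length c = n" by (simp add: CC_def)
      show "(\<Sum>d\<in>{0, 1, 2::nat}. [:0, 1:] ^ ny (c @ [d]) * g (Kv (cnt (c @ [d])) K))
        = [:0, 1:] ^ ny c * g (Kv (\<lambda>q. cnt c q + (if q = 2 * n then 1 else 0)) K)
          + [:0, 1:] ^ ny c * g (Kv (\<lambda>q. cnt c q + (if q = 2 * n + 2 then 1 else 0)) K)
          + [:0, 1:] * ([:0, 1:] ^ ny c * g (Kv (\<lambda>q. cnt c q + (if q = 2 * n + 1 then 1 else 0)) K))"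
        using cn[OF lc] by (simp add: ny_snoc pos_def algebra_simps)
    qed
    also have "\<dots> = h (inc (2 * n) K) + h (inc (2 * n + 2) K) + [:0, 1:] * h (inc (2 * n + 1) K)"
      using IH[of "2 * n"] IH[of "2 * n + 2"] IH[of "2 * n + 1"] p
      by (simp add: sum.distrib sum_distrib_left)
    finally show ?thesis by simp
  qed
  also have "\<dots> = (\<Sum>x\<in>CC n \<times> {0, 1, 2}. [:0, 1:] ^ ny ((\<lambda>(c, d). c @ [d]) x) * g (Kv (cnt ((\<lambda>(c, d). c @ [d]) x)) K))"
    by (subst sum.cartesian_product) (simp add: case_prod_beta)
  also have "\<dots> = (\<Sum>c\<in>CC (Suc n). [:0, 1:] ^ ny c * g (Kv (cnt c) K))"
    unfolding CC_Suc by (rule sum.reindex[OF inj_snoc, symmetric, unfolded comp_def])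
  finally show ?case .
qed

definition KK :: "nat \<Rightarrow> nat list \<Rightarrow> nat list" where
  "KK s k = map (\<lambda>q. if even q then k ! (q div 2) else 0) [0..<2 * s - 1]"

lemma sum_list_map_upt0: "sum_list (map f [0..<l]) = (\<Sum>q<l. f q)"
  by (induction l) auto

lemma sum_take_Kv:
  "l \<le> length K \<Longrightarrow> sum_list (take l (Kv v K)) = (\<Sum>q<l. K ! q) + (\<Sum>q<l. v q)"
proof -
  assume l: "l \<le> length K"
  have "take l (Kv v K) = map (\<lambda>q. K ! q + v q) [0..<l]"
    unfolding Kv_def using l by (simp add: take_map)
  then show ?thesis by (simp add: sum_list_map_upt0 sum.distrib)
qed

lemma sum_KK:
  "l \<le> 2 * s - 1 \<Longrightarrow> length k = s \<Longrightarrow> (\<Sum>q<l. KK s k ! q) = sum_list (take ((l + 1) div 2) k)"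
proof (induction l)
  case 0 then show ?case by simp
next
  case (Suc l)
  have l: "l < 2 * s - 1" using Suc.prems by simp
  have Kl: "KK s k ! l = (if even l then k ! (l div 2) else 0)" using l by (simp add: KK_def)
  show ?case
  proof (cases "even l")
    case True
    have ld: "l div 2 < length k" using l Suc.prems(2) True by auto
    have "(Suc l + 1) div 2 = Suc (l div 2)" "(l + 1) div 2 = l div 2" using True by auto
    then show ?thesis using Suc.IH Suc.prems l Kl True take_Suc_conv_app_nth[OF ld] by simp
  next
    case False
    have "(Suc l + 1) div 2 = (l + 1) div 2" using False by presburger
    then show ?thesis using Suc.IH Suc.prems l Kl False by simp
  qed
qed

lemma sum_vplus: "(\<Sum>q<(l::nat). if even q \<and> q < 2 * (s::nat) then 1 else 0) = (if l \<le> 2 * s then (l + 1) div 2 else (s::nat))"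
proof (induction l)
  case 0 then show ?case by simp
next
  case (Suc l)
  then show ?case by (cases "even l"; auto; presburger)
qed

lemma sum_cnt: "(\<Sum>q<l. cnt c q) = card {j. j < length c \<and> pos j (c ! j) < l}"
proof (induction l)
  case 0 then show ?case by simp
next
  case (Suc l)
  have "{j. j < length c \<and> pos j (c ! j) < Suc l}
      = {j. j < length c \<and> pos j (c ! j) < l} \<union> {j. j < length c \<and> pos j (c ! j) = l}" by auto
  moreover have "card (\<dots>) = card {j. j < length c \<and> pos j (c ! j) < l} + card {j. j < length c \<and> pos j (c ! j) = l}"
    by (rule card_Un_disjoint) auto
  ultimately show ?case using Suc.IH by (simp add: cnt_def)
qed

lemma card_pos_odd:
  assumes "i \<le> length c"
  shows "card {j. j < length c \<and> pos j (c ! j) < 2 * i + 1} = i + (if i < length c \<and> c ! i = 0 then 1 else 0)"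
proof -
  have "{j. j < length c \<and> pos j (c ! j) < 2 * i + 1} = {..<i} \<union> (if i < length c \<and> c ! i = 0 then {i} else {})"
  proof (intro set_eqI)
    fix x
    show "x \<in> {j. j < length c \<and> pos j (c ! j) < 2 * i + 1} \<longleftrightarrow> x \<in> {..<i} \<union> (if i < length c \<and> c ! i = 0 then {i} else {})"
    proof (cases "x < i")
      case True then show ?thesis using assms by (auto simp: pos_def)
    next
      case False
      then consider "x = i" | "x > i" by linarith
      then show ?thesis using assms by cases (auto simp: pos_def)
    qed
  qed
  then show ?thesis by auto
qed

lemma card_pos_even:
  assumes "i < length c"
  shows "card {j. j < length c \<and> pos j (c ! j) < 2 * i + 2} = i + (if c ! i \<noteq> 1 then 1 else 0)"
proof -
  have "{j. j < length c \<and> pos j (c ! j) < 2 * i + 2} = {..<i} \<union> (if c ! i \<noteq> 1 then {i} else {})"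
  proof (intro set_eqI)
    fix x
    show "x \<in> {j. j < length c \<and> pos j (c ! j) < 2 * i + 2} \<longleftrightarrow> x \<in> {..<i} \<union> (if c ! i \<noteq> 1 then {i} else {})"
    proof (cases "x < i")
      case True then show ?thesis using assms by (auto simp: pos_def)
    next
      case False
      then consider "x = i" | "x > i" by linarith
      then show ?thesis using assms by cases (auto simp: pos_def)
    qed
  qed
  then show ?thesis by auto
qed

lemma psums_img: "psums L = (\<lambda>l. sum_list (take l L)) ` {..length L}"
  unfolding psums_def by auto

lemma sum_list_psum: "sum_list L = sum_list (take (length L) L)"
  by simp

context
  fixes s :: nat and k :: "nat list"
  assumes s0: "0 < s" and lk: "length k = s"
begin

definition NN :: "nat \<Rightarrow> nat" where "NN i = sum_list (take i k) + i"
definition mm :: nat where "mm = NN s"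
definition Tm :: "nat \<Rightarrow> vert" where "Tm i = (NN i, mm - NN i)"
definition PP :: "nat \<Rightarrow> vert" where "PP u = (u, mm - 1 - u)"
definition lft :: "nat \<Rightarrow> vert \<times> vert" where "lft i = (PP (NN i - 1), Tm i)"
definition low :: "nat \<Rightarrow> vert \<times> vert" where "low i = (PP (NN i), Tm i)"
definition Kp :: "nat list" where "Kp = Kv (\<lambda>q. if even q \<and> q < 2 * s then 1 else 0) (KK s k)"
definition Kc :: "nat list \<Rightarrow> nat list" where "Kc c = Kv (cnt c) (KK s k)"
definition XX :: "nat list \<Rightarrow> nat set" where
  "XX c = {0, mm - 1} \<union> (\<lambda>j. NN (Suc j) - 1) ` {j. j < s - 1 \<and> c ! j \<noteq> 0}
     \<union> (\<lambda>j. NN (Suc j)) ` {j. j < s - 1 \<and> c ! j \<noteq> 1}"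
definition Eof :: "nat list \<Rightarrow> (vert \<times> vert) set" where
  "Eof c = {low 0, lft s} \<union> (\<lambda>j. lft (Suc j)) ` {j. j < s - 1 \<and> c ! j \<noteq> 0}
     \<union> (\<lambda>j. low (Suc j)) ` {j. j < s - 1 \<and> c ! j \<noteq> 1}"

lemma NN_0: "NN 0 = 0" by (simp add: NN_def)

lemma Suc_le_s: "x < s - 1 \<Longrightarrow> Suc x \<le> s" by linarith

lemma NN_Suc: "i < s \<Longrightarrow> NN (Suc i) = NN i + k ! i + 1"
  using take_Suc_conv_app_nth[of i k] lk by (simp add: NN_def)

lemma NN_mono: "i < j \<Longrightarrow> j \<le> s \<Longrightarrow> NN i < NN j"
proof (induction j)
  case 0 then show ?case by simp
next
  case (Suc j)
  then have "NN j < NN (Suc j)" using NN_Suc[of j] by simp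
  then show ?case using Suc by (cases "i = j") auto
qed

lemma NN_le: "i \<le> s \<Longrightarrow> NN i \<le> mm"
  unfolding mm_def using NN_mono[of i s] by (cases "i = s") auto

lemma NN_inj: "i \<le> s \<Longrightarrow> j \<le> s \<Longrightarrow> NN i = NN j \<Longrightarrow> i = j"
  using NN_mono[of i j] NN_mono[of j i] by (cases i j rule: linorder_cases) auto

lemma NN_pos: "0 < i \<Longrightarrow> i \<le> s \<Longrightarrow> 0 < NN i"
  using NN_mono[of 0 i] NN_0 by simp

lemma NN_lt: "i < s \<Longrightarrow> NN i < mm"
  unfolding mm_def using NN_mono by simp

lemma mm_pos: "0 < mm"
  unfolding mm_def using NN_pos[of s] s0 by simp

lemma length_KK: "length (KK s k) = 2 * s - 1" by (simp add: KK_def)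

lemma sum_Kp: "l \<le> 2 * s - 1 \<Longrightarrow> sum_list (take l Kp) = NN ((l + 1) div 2)"
proof -
  assume l: "l \<le> 2 * s - 1"
  have "sum_list (take l Kp) = sum_list (take ((l + 1) div 2) k) + (l + 1) div 2"
    unfolding Kp_def using sum_take_Kv[where l=l and K="KK s k"] sum_KK[OF l lk] sum_vplus[where l=l and s=s] l length_KK
    by simp
  then show ?thesis by (simp add: NN_def)
qed

lemma psums_Kp: "psums Kp = NN ` {..s}"
proof -
  have lKp: "length Kp = 2 * s - 1" by (simp add: Kp_def length_KK)
  have "psums Kp = (\<lambda>l. NN ((l + 1) div 2)) ` {..2 * s - 1}"
    unfolding psums_img lKp using sum_Kp by (intro image_cong) auto
  also have "\<dots> = NN ` ((\<lambda>l. (l + 1) div 2) ` {..2 * s - 1})" by (simp add: image_image)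
  also have "(\<lambda>l. (l + 1) div 2) ` {..2 * s - 1} = {..s}"
  proof (intro set_eqI iffI)
    fix i assume "i \<in> (\<lambda>l. (l + 1) div 2) ` {..2 * s - 1}"
    then show "i \<in> {..s}" by auto
  next
    fix i assume i: "i \<in> {..s}"
    show "i \<in> (\<lambda>l. (l + 1) div 2) ` {..2 * s - 1}"
    proof (cases i)
      case 0 then show ?thesis by (intro image_eqI[of _ _ 0]) auto
    next
      case (Suc i') then show ?thesis using i by (intro image_eqI[of _ _ "2 * i' + 1"]) auto
    qed
  qed
  finally show ?thesis .
qed

lemma sumlist_Kp: "sum_list Kp = mm"
proof -
  have lKp: "length Kp = 2 * s - 1" by (simp add: Kp_def length_KK)
  have "sum_list Kp = sum_list (take (2 * s - 1) Kp)" using lKp by simp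
  also have "\<dots> = NN ((2 * s - 1 + 1) div 2)" by (rule sum_Kp) simp
  also have "(2 * s - 1 + 1) div 2 = s" using s0 by simp
  finally show ?thesis by (simp add: mm_def)
qed

lemma terminals_Kp: "terminals Kp = Tm ` {..s}"
  unfolding terminals_eq psums_Kp sumlist_Kp by (auto simp: Tm_def)

lemma length_Kc: "length (Kc c) = 2 * s - 1" by (simp add: Kc_def length_KK)

lemma SS_gen: "c \<in> CC (s - 1) \<Longrightarrow> l \<le> 2 * s - 1 \<Longrightarrow>
    sum_list (take l (Kc c)) = sum_list (take ((l + 1) div 2) k) + card {j. j < s - 1 \<and> pos j (c ! j) < l}"
  unfolding Kc_def using sum_take_Kv[where l=l and K="KK s k"] sum_KK[where l=l and s=s and k=k] lk sum_cnt[where l=l and c=c] length_KK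
  by (simp add: CC_def)

lemma SS_odd: "c \<in> CC (s - 1) \<Longrightarrow> i \<le> s - 1 \<Longrightarrow>
    sum_list (take (2 * i + 1) (Kc c)) = NN (Suc i) - 1 + (if i < s - 1 \<and> c ! i = 0 then 1 else 0)"
proof -
  assume c: "c \<in> CC (s - 1)" and i: "i \<le> s - 1"
  have lc: "length c = s - 1" using c by (simp add: CC_def)
  have "sum_list (take (2 * i + 1) (Kc c)) = sum_list (take (Suc i) k) + card {j. j < s - 1 \<and> pos j (c ! j) < 2 * i + 1}"
    using SS_gen[OF c, of "2 * i + 1"] i s0 by simp
  also have "card {j. j < s - 1 \<and> pos j (c ! j) < 2 * i + 1} = i + (if i < s - 1 \<and> c ! i = 0 then 1 else 0)"
    using card_pos_odd[of i c] lc i by simp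
  finally show ?thesis by (simp add: NN_def)
qed

lemma SS_even: "c \<in> CC (s - 1) \<Longrightarrow> i < s - 1 \<Longrightarrow>
    sum_list (take (2 * i + 2) (Kc c)) = NN (Suc i) - 1 + (if c ! i \<noteq> 1 then 1 else 0)"
proof -
  assume c: "c \<in> CC (s - 1)" and i: "i < s - 1"
  have lc: "length c = s - 1" using c by (simp add: CC_def)
  have "sum_list (take (2 * i + 2) (Kc c)) = sum_list (take (Suc i) k) + card {j. j < s - 1 \<and> pos j (c ! j) < 2 * i + 2}"
    using SS_gen[OF c, of "2 * i + 2"] i s0 by simp
  also have "card {j. j < s - 1 \<and> pos j (c ! j) < 2 * i + 2} = i + (if c ! i \<noteq> 1 then 1 else 0)"
    using card_pos_even[of i c] lc i by simp
  finally show ?thesis by (simp add: NN_def)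
qed

lemma sumlist_Kc: "c \<in> CC (s - 1) \<Longrightarrow> sum_list (Kc c) = mm - 1"
proof -
  assume c: "c \<in> CC (s - 1)"
  have "sum_list (Kc c) = sum_list (take (2 * (s - 1) + 1) (Kc c))" using length_Kc s0 by simp
  also have "\<dots> = NN s - 1" using SS_odd[OF c, of "s - 1"] s0 by simp
  finally show ?thesis by (simp add: mm_def)
qed

lemma psums_Kc: "c \<in> CC (s - 1) \<Longrightarrow> psums (Kc c) = XX c"
proof -
  assume c: "c \<in> CC (s - 1)"
  have c012: "c ! j \<in> {0, 1, 2}" if "j < s - 1" for j
  proof -
    have "c ! j \<in> set c" using that c by (simp add: CC_def)
    then show ?thesis using c unfolding CC_def by blast
  qed
  have NNp: "NN (Suc j) - 1 + 1 = NN (Suc j)" if "j < s - 1" for j using NN_pos[of "Suc j"] that by simp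
  have "psums (Kc c) = (\<lambda>l. sum_list (take l (Kc c))) ` {..2 * s - 1}"
    unfolding psums_img length_Kc ..
  also have "\<dots> = XX c"
  proof (intro set_eqI iffI)
    fix x assume "x \<in> (\<lambda>l. sum_list (take l (Kc c))) ` {..2 * s - 1}"
    then obtain l where l: "l \<le> 2 * s - 1" "x = sum_list (take l (Kc c))" by auto
    consider "l = 0" | i where "l = 2 * i + 1" | i where "l = 2 * i + 2"
      by (metis add_2_eq_Suc' add_Suc_right oddE evenE add.commute mult_2 not0_implies_Suc nat.simps(3) odd_Suc_minus_one)
    then show "x \<in> XX c"
    proof cases
      case 1 then show ?thesis using l by (simp add: XX_def)
    next
      case (2 i)
      then have i: "i \<le> s - 1" using l by simp
      have x: "x = NN (Suc i) - 1 + (if i < s - 1 \<and> c ! i = 0 then 1 else 0)" using SS_odd[OF c i] l 2 by simp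
      show ?thesis
      proof (cases "i < s - 1")
        case False
        then have "i = s - 1" using i by simp
        then show ?thesis using x s0 by (simp add: XX_def mm_def)
      next
        case True
        show ?thesis
        proof (cases "c ! i = 0")
          case True
          then show ?thesis using x NNp[OF \<open>i < s - 1\<close>] \<open>i < s - 1\<close> unfolding XX_def by auto
        next
          case False
          then show ?thesis using x \<open>i < s - 1\<close> unfolding XX_def by auto
        qed
      qed
    next
      case (3 i)
      then have i: "i < s - 1" using l by simp
      have x: "x = NN (Suc i) - 1 + (if c ! i \<noteq> 1 then 1 else 0)" using SS_even[OF c i] l 3 by simp
      show ?thesis
      proof (cases "c ! i = 1")
        case True
        then show ?thesis using x i unfolding XX_def by auto
      next
        case False
        then show ?thesis using x NNp[OF i] i unfolding XX_def by auto
      qed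
    qed
  next
    fix x assume x: "x \<in> XX c"
    define F where "F = (\<lambda>l. sum_list (take l (Kc c)))"
    have F0: "F 0 \<in> F ` {..2 * s - 1}" by simp
    have Fo: "F (2 * i + 1) \<in> F ` {..2 * s - 1}" if "i \<le> s - 1" for i
      using that s0 by (intro imageI) simp
    have Fe: "F (2 * i + 2) \<in> F ` {..2 * s - 1}" if "i < s - 1" for i
      using that s0 by (intro imageI) simp
    consider "x = 0" | "x = mm - 1" | j where "j < s - 1" "c ! j \<noteq> 0" "x = NN (Suc j) - 1"
      | j where "j < s - 1" "c ! j \<noteq> 1" "x = NN (Suc j)"
      using x unfolding XX_def by blast
    then have "x \<in> F ` {..2 * s - 1}"
    proof cases
      case 1 then show ?thesis using F0 by (simp add: F_def)
    next
      case 2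
      have "F (2 * (s - 1) + 1) = mm - 1" using SS_odd[OF c, of "s - 1"] s0 by (simp add: F_def mm_def)
      then show ?thesis using Fo[of "s - 1"] 2 by simp
    next
      case (3 j)
      show ?thesis
      proof (cases "c ! j = 1")
        case True
        then have "F (2 * j + 2) = x" using SS_even[OF c 3(1)] 3 by (simp add: F_def)
        then show ?thesis using Fe[OF 3(1)] by simp
      next
        case False
        then have "F (2 * j + 1) = x" using SS_odd[OF c, of j] 3 by (simp add: F_def)
        then show ?thesis using Fo[of j] 3(1) by simp
      qed
    next
      case (4 j)
      show ?thesis
      proof (cases "c ! j = 0")
        case True
        then have "F (2 * j + 1) = x" using SS_odd[OF c, of j] 4 NNp[OF 4(1)] by (simp add: F_def)
        then show ?thesis using Fo[of j] 4(1) by simp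
      next
        case False
        then have "F (2 * j + 2) = x" using SS_even[OF c 4(1)] 4 NNp[OF 4(1)] by (simp add: F_def)
        then show ?thesis using Fe[OF 4(1)] by simp
      qed
    qed
    then show "x \<in> (\<lambda>l. sum_list (take l (Kc c))) ` {..2 * s - 1}" unfolding F_def .
  qed
  finally show ?thesis .
qed

lemma terminals_Kc: "c \<in> CC (s - 1) \<Longrightarrow> terminals (Kc c) = PP ` XX c"
  unfolding terminals_eq using psums_Kc sumlist_Kc by (auto simp: PP_def)

lemma Tm_inj: "i \<le> s \<Longrightarrow> j \<le> s \<Longrightarrow> Tm i = Tm j \<Longrightarrow> i = j"
  unfolding Tm_def using NN_inj by auto

lemma lev_Tm: "i \<le> s \<Longrightarrow> lev (Tm i) = mm"
  unfolding Tm_def lev_def using NN_le by simp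

lemma qplus_iff: "Qplus_edge u (a, b) \<longleftrightarrow> (0 < b \<and> u = (a, b - 1)) \<or> (0 < a \<and> u = (a - 1, b))"
  unfolding Qplus_edge_def by (cases u) auto

lemma snd_lft[simp]: "snd (lft i) = Tm i" by (simp add: lft_def)
lemma snd_low[simp]: "snd (low i) = Tm i" by (simp add: low_def)

lemma lft_q: "0 < i \<Longrightarrow> i \<le> s \<Longrightarrow> Qplus_edge (fst (lft i)) (Tm i)"
proof -
  assume i: "0 < i" "i \<le> s"
  have "0 < NN i" "NN i \<le> mm" using NN_pos[OF i] NN_le[OF i(2)] by auto
  then show ?thesis unfolding lft_def PP_def Tm_def qplus_iff by simp
qed

lemma low_q: "i < s \<Longrightarrow> Qplus_edge (fst (low i)) (Tm i)"
proof -
  assume i: "i < s"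
  have "NN i < mm" using NN_lt[OF i] .
  then show ?thesis unfolding low_def PP_def Tm_def qplus_iff by simp
qed

lemma pred_cases:
  assumes "i \<le> s" "Qplus_edge u (Tm i)"
  shows "(0 < i \<and> (u, Tm i) = lft i) \<or> (i < s \<and> (u, Tm i) = low i)"
proof -
  have "(0 < mm - NN i \<and> u = (NN i, mm - NN i - 1)) \<or> (0 < NN i \<and> u = (NN i - 1, mm - NN i))"
    using assms(2) unfolding Tm_def qplus_iff .
  then show ?thesis
  proof
    assume a: "0 < mm - NN i \<and> u = (NN i, mm - NN i - 1)"
    then have "i \<noteq> s" by (auto simp: mm_def)
    then have "i < s" using assms(1) by simp
    then show ?thesis using a by (simp add: low_def PP_def)
  next
    assume a: "0 < NN i \<and> u = (NN i - 1, mm - NN i)"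
    then have "i \<noteq> 0" using NN_0 by (metis less_irrefl)
    moreover have "NN i \<le> mm" using NN_le[OF assms(1)] .
    ultimately show ?thesis using a by (simp add: lft_def PP_def)
  qed
qed

lemma lft_ne_low: "0 < i \<Longrightarrow> i \<le> s \<Longrightarrow> j \<le> s \<Longrightarrow> lft i \<noteq> low j"
proof
  assume i: "0 < i" "i \<le> s" and j: "j \<le> s" and eq: "lft i = low j"
  then have "Tm i = Tm j" using snd_lft snd_low by metis
  then have "i = j" using Tm_inj i j by blast
  then have "NN i - 1 = NN i" using eq by (simp add: lft_def low_def PP_def)
  then show False using NN_pos[OF i] by simp
qed

lemma lft_inj: "i \<le> s \<Longrightarrow> j \<le> s \<Longrightarrow> lft i = lft j \<Longrightarrow> i = j"
  using Tm_inj snd_lft by metis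

lemma low_inj: "i \<le> s \<Longrightarrow> j \<le> s \<Longrightarrow> low i = low j \<Longrightarrow> i = j"
  using Tm_inj snd_low by metis

definition TT :: "vert set" where "TT = Tm ` {..s}"

lemma Eof_Adm: "c \<in> CC (s - 1) \<Longrightarrow> Eof c \<in> Adm TT"
proof -
  assume c: "c \<in> CC (s - 1)"
  have eI: "Qplus_edge (fst e) (snd e) \<Longrightarrow> snd e \<in> TT \<Longrightarrow> e \<in> inE TT" for e
    by (cases e) (auto simp: inE_def)
  have TmT: "i \<le> s \<Longrightarrow> Tm i \<in> TT" for i by (simp add: TT_def)
  have sub: "Eof c \<subseteq> inE TT"
  proof
    fix e assume "e \<in> Eof c"
    then consider "e = low 0" | "e = lft s" | j where "j < s - 1" "e = lft (Suc j)"
      | j where "j < s - 1" "e = low (Suc j)" unfolding Eof_def by blast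
    then show "e \<in> inE TT"
    proof cases
      case 1 then show ?thesis using low_q[of 0] s0 eI[of e] TmT[of 0] by simp
    next
      case 2 then show ?thesis using lft_q[of s] s0 eI[of e] TmT[of s] by simp
    next
      case (3 j) then show ?thesis using lft_q[of "Suc j"] eI[of e] TmT[of "Suc j"] by simp
    next
      case (4 j) then show ?thesis using low_q[of "Suc j"] eI[of e] TmT[of "Suc j"] by simp
    qed
  qed
  have cov: "\<exists>u. (u, t) \<in> Eof c" if "t \<in> TT" for t
  proof -
    have "t \<in> Tm ` {..s}" using that by (simp add: TT_def)
    then obtain i where i: "i \<le> s" "t = Tm i" by blast
    consider "i = 0" | "i = s" | j where "i = Suc j" "j < s - 1" using i(1)
      by (metis Suc_pred' diff_Suc_1 less_Suc_eq_0_disj le_neq_implies_less not_less_eq s0)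
    then show ?thesis
    proof cases
      case 1 then show ?thesis using i by (intro exI[of _ "fst (low 0)"]) (simp add: Eof_def low_def)
    next
      case 2 then show ?thesis using i by (intro exI[of _ "fst (lft s)"]) (simp add: Eof_def lft_def)
    next
      case (3 j)
      show ?thesis
      proof (cases "c ! j = 0")
        case True
        then have "low (Suc j) \<in> Eof c" using 3 unfolding Eof_def by auto
        then show ?thesis using i 3 by (intro exI[of _ "fst (low (Suc j))"]) (simp add: low_def)
      next
        case False
        then have "lft (Suc j) \<in> Eof c" using 3 unfolding Eof_def by auto
        then show ?thesis using i 3 by (intro exI[of _ "fst (lft (Suc j))"]) (simp add: lft_def)
      qed
    qed
  qed
  show ?thesis unfolding Adm_def using sub cov by blast
qed

lemma mem_lft: "j < s - 1 \<Longrightarrow> lft (Suc j) \<in> Eof c \<longleftrightarrow> c ! j \<noteq> 0"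
proof
  assume j: "j < s - 1" and m: "lft (Suc j) \<in> Eof c"
  have ne1: "lft (Suc j) \<noteq> low i" if "i \<le> s" for i using lft_ne_low[of "Suc j" i] j that by simp
  have ne2: "lft (Suc j) \<noteq> lft s"
  proof
    assume "lft (Suc j) = lft s"
    moreover have "Suc j \<le> s" "Suc j \<noteq> s" using j by auto
    ultimately show False using lft_inj[of "Suc j" s] by simp
  qed
  have nW: "lft (Suc j) \<notin> (\<lambda>j. low (Suc j)) ` {j. j < s - 1 \<and> c ! j \<noteq> 1}"
  proof
    assume "lft (Suc j) \<in> (\<lambda>j. low (Suc j)) ` {j. j < s - 1 \<and> c ! j \<noteq> 1}"
    then obtain x where "x < s - 1" "lft (Suc j) = low (Suc x)" by auto
    moreover have "Suc x \<le> s" using \<open>x < s - 1\<close> by simp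
    ultimately show False using ne1[of "Suc x"] by simp
  qed
  have "lft (Suc j) \<noteq> low 0" using ne1[of 0] by simp
  then have "lft (Suc j) \<in> (\<lambda>j. lft (Suc j)) ` {j. j < s - 1 \<and> c ! j \<noteq> 0}"
    using m ne2 nW unfolding Eof_def by blast
  then obtain j' where j': "j' < s - 1" "c ! j' \<noteq> 0" "lft (Suc j) = lft (Suc j')" by auto
  then have "j = j'" using lft_inj[of "Suc j" "Suc j'"] j by simp
  then show "c ! j \<noteq> 0" using j' by simp
next
  assume "j < s - 1" "c ! j \<noteq> 0"
  then show "lft (Suc j) \<in> Eof c" unfolding Eof_def by blast
qed

lemma mem_low: "j < s - 1 \<Longrightarrow> low (Suc j) \<in> Eof c \<longleftrightarrow> c ! j \<noteq> 1"
proof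
  assume j: "j < s - 1" and m: "low (Suc j) \<in> Eof c"
  have ne1: "lft i \<noteq> low (Suc j)" if "0 < i" "i \<le> s" for i using lft_ne_low[of i "Suc j"] j that by simp
  have ne2: "low (Suc j) \<noteq> low 0"
  proof
    assume "low (Suc j) = low 0"
    moreover have "Suc j \<le> s" using j by auto
    ultimately show False using low_inj[of "Suc j" 0] by simp
  qed
  have nL: "low (Suc j) \<notin> (\<lambda>j. lft (Suc j)) ` {j. j < s - 1 \<and> c ! j \<noteq> 0}"
  proof
    assume "low (Suc j) \<in> (\<lambda>j. lft (Suc j)) ` {j. j < s - 1 \<and> c ! j \<noteq> 0}"
    then obtain x where "x < s - 1" "low (Suc j) = lft (Suc x)" by auto
    moreover have "Suc x \<le> s" using \<open>x < s - 1\<close> by simp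
    ultimately show False using ne1[of "Suc x"] by simp
  qed
  have "low (Suc j) \<noteq> lft s" using ne1[of s] s0 by simp
  then have "low (Suc j) \<in> (\<lambda>j. low (Suc j)) ` {j. j < s - 1 \<and> c ! j \<noteq> 1}"
    using m ne2 nL unfolding Eof_def by blast
  then obtain j' where j': "j' < s - 1" "c ! j' \<noteq> 1" "low (Suc j) = low (Suc j')" by auto
  then have "j = j'" using low_inj[of "Suc j" "Suc j'"] j by simp
  then show "c ! j \<noteq> 1" using j' by simp
next
  assume "j < s - 1" "c ! j \<noteq> 1"
  then show "low (Suc j) \<in> Eof c" unfolding Eof_def by blast
qed

lemma CC_nth: "c \<in> CC n \<Longrightarrow> j < n \<Longrightarrow> c ! j \<in> {0, 1, 2}"
proof -
  assume c: "c \<in> CC n" and j: "j < n"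
  have "c ! j \<in> set c" using j c by (simp add: CC_def)
  then show ?thesis using c unfolding CC_def by blast
qed

lemma Eof_inj: "inj_on Eof (CC (s - 1))"
proof (rule inj_onI)
  fix c c' assume c: "c \<in> CC (s - 1)" and c': "c' \<in> CC (s - 1)" and eq: "Eof c = Eof c'"
  show "c = c'"
  proof (rule nth_equalityI)
    show "length c = length c'" using c c' by (simp add: CC_def)
    fix j assume "j < length c"
    then have j: "j < s - 1" using c by (simp add: CC_def)
    have "c ! j \<noteq> 0 \<longleftrightarrow> c' ! j \<noteq> 0" using mem_lft[OF j, of c] mem_lft[OF j, of c'] eq by simp
    moreover have "c ! j \<noteq> 1 \<longleftrightarrow> c' ! j \<noteq> 1" using mem_low[OF j, of c] mem_low[OF j, of c'] eq by simp
    moreover have "c ! j \<in> {0, 1, 2}" "c' ! j \<in> {0, 1, 2}" using CC_nth c c' j by auto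
    ultimately show "c ! j = c' ! j" by auto
  qed
qed

lemma Eof_surj: "Ein \<in> Adm TT \<Longrightarrow> Ein \<in> Eof ` CC (s - 1)"
proof -
  assume A: "Ein \<in> Adm TT"
  define c where "c = map (\<lambda>j. if lft (Suc j) \<in> Ein then (if low (Suc j) \<in> Ein then 2 else 1) else (0::nat)) [0..<s - 1]"
  have cj: "c ! j = (if lft (Suc j) \<in> Ein then (if low (Suc j) \<in> Ein then 2 else 1) else 0)" if "j < s - 1" for j
    using that by (simp add: c_def)
  have cC: "c \<in> CC (s - 1)" unfolding CC_def c_def by auto
  have inE': "\<And>u v. (u, v) \<in> Ein \<Longrightarrow> (\<exists>i\<le>s. v = Tm i) \<and> Qplus_edge u v"
    using A unfolding Adm_def inE_def TT_def by blast
  have cov: "\<And>i. i \<le> s \<Longrightarrow> \<exists>u. (u, Tm i) \<in> Ein" using A unfolding Adm_def TT_def by blast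
  have "Ein = Eof c"
  proof (intro set_eqI iffI)
    fix e assume e: "e \<in> Ein"
    obtain u v where uv: "e = (u, v)" by (cases e)
    then obtain i where i: "i \<le> s" "v = Tm i" "Qplus_edge u v" using inE'[of u v] e by auto
    from pred_cases[OF i(1)] i(3) i(2)
    have "(0 < i \<and> e = lft i) \<or> (i < s \<and> e = low i)" using uv by simp
    then show "e \<in> Eof c"
    proof
      assume a: "0 < i \<and> e = lft i"
      show ?thesis
      proof (cases "i = s")
        case True then show ?thesis using a unfolding Eof_def by simp
      next
        case False
        then obtain j where j: "i = Suc j" "j < s - 1" using a i(1) by (cases i) auto
        then have "c ! j \<noteq> 0" using cj[OF j(2)] a e by simp
        then show ?thesis using mem_lft[OF j(2)] a j by simp
      qed
    next
      assume a: "i < s \<and> e = low i"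
      show ?thesis
      proof (cases "i = 0")
        case True then show ?thesis using a unfolding Eof_def by simp
      next
        case False
        then obtain j where j: "i = Suc j" "j < s - 1" using a by (cases i) auto
        then have "c ! j \<noteq> 1" using cj[OF j(2)] a e by simp
        then show ?thesis using mem_low[OF j(2)] a j by simp
      qed
    qed
  next
    fix e assume e: "e \<in> Eof c"
    have l0: "low 0 \<in> Ein"
    proof -
      obtain u where u: "(u, Tm 0) \<in> Ein" using cov[of 0] by auto
      then have "Qplus_edge u (Tm 0)" using inE' by blast
      then have "(u, Tm 0) = low 0" using pred_cases[of 0 u] by simp
      then show ?thesis using u by simp
    qed
    have ls: "lft s \<in> Ein"
    proof -
      obtain u where u: "(u, Tm s) \<in> Ein" using cov[of s] by auto
      then have "Qplus_edge u (Tm s)" using inE' by blast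
      then have "(u, Tm s) = lft s" using pred_cases[of s u] by simp
      then show ?thesis using u by simp
    qed
    have lj: "lft (Suc j) \<in> Ein" if "j < s - 1" "c ! j \<noteq> 0" for j
      using cj[OF that(1)] that(2) by (auto split: if_splits)
    have wj: "low (Suc j) \<in> Ein" if j: "j < s - 1" "c ! j \<noteq> 1" for j
    proof (cases "lft (Suc j) \<in> Ein")
      case True then show ?thesis using cj[OF j(1)] j(2) by (auto split: if_splits)
    next
      case False
      have "Suc j \<le> s" using j(1) by simp
      then obtain u where u: "(u, Tm (Suc j)) \<in> Ein" using cov[of "Suc j"] by blast
      then have "Qplus_edge u (Tm (Suc j))" using inE' by blast
      then have "(u, Tm (Suc j)) = lft (Suc j) \<or> (u, Tm (Suc j)) = low (Suc j)"
        using pred_cases[of "Suc j" u] j by auto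
      then show ?thesis using u False by auto
    qed
    show "e \<in> Ein" using e l0 ls lj wj unfolding Eof_def by blast
  qed
  then show ?thesis using cC by blast
qed

lemma Adm_TT: "Adm TT = Eof ` CC (s - 1)"
  using Eof_surj Eof_Adm by blast

lemma card_TT: "card TT = Suc s"
proof -
  have "inj_on Tm {..s}" using Tm_inj by (auto simp: inj_on_def)
  then show ?thesis unfolding TT_def by (simp add: card_image)
qed

lemma card_Eof: "c \<in> CC (s - 1) \<Longrightarrow> card (Eof c) - card TT = ny c"
proof -
  assume c: "c \<in> CC (s - 1)"
  define A0 where "A0 = {j. j < s - 1 \<and> c ! j \<noteq> 0}"
  define A1 where "A1 = {j. j < s - 1 \<and> c ! j \<noteq> 1}"
  define L where "L = (\<lambda>j. lft (Suc j)) ` A0"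
  define W where "W = (\<lambda>j. low (Suc j)) ` A1"
  have fin: "finite A0" "finite A1" unfolding A0_def A1_def by auto
  have "inj_on (\<lambda>j. lft (Suc j)) A0"
  proof (rule inj_onI)
    fix x y assume "x \<in> A0" "y \<in> A0" "lft (Suc x) = lft (Suc y)"
    moreover then have "Suc x \<le> s" "Suc y \<le> s" by (auto simp: A0_def)
    ultimately show "x = y" using lft_inj[of "Suc x" "Suc y"] by simp
  qed
  then have cL: "card L = card A0" unfolding L_def by (rule card_image)
  have "inj_on (\<lambda>j. low (Suc j)) A1"
  proof (rule inj_onI)
    fix x y assume "x \<in> A1" "y \<in> A1" "low (Suc x) = low (Suc y)"
    moreover then have "Suc x \<le> s" "Suc y \<le> s" by (auto simp: A1_def)
    ultimately show "x = y" using low_inj[of "Suc x" "Suc y"] by simp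
  qed
  then have cW: "card W = card A1" unfolding W_def by (rule card_image)
  have d1: "L \<inter> W = {}"
  proof -
    have False if a: "e \<in> L" "e \<in> W" for e
    proof -
      obtain x y where "x < s - 1" "y < s - 1" "e = lft (Suc x)" "e = low (Suc y)"
        using a unfolding L_def W_def A0_def A1_def by blast
      then show False using lft_ne_low[of "Suc x" "Suc y"] by (simp add: Suc_le_s)
    qed
    then show ?thesis by blast
  qed
  have "low 0 \<notin> L"
  proof
    assume "low 0 \<in> L"
    then obtain x where "x < s - 1" "low 0 = lft (Suc x)" unfolding L_def A0_def by blast
    then show False using lft_ne_low[of "Suc x" 0] by (simp add: Suc_le_s)
  qed
  moreover have "low 0 \<notin> W"
  proof
    assume "low 0 \<in> W"
    then obtain x where "x < s - 1" "low 0 = low (Suc x)" unfolding W_def A1_def by blast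
    then show False using low_inj[of 0 "Suc x"] by (simp add: Suc_le_s)
  qed
  moreover have "lft s \<notin> L"
  proof
    assume "lft s \<in> L"
    then obtain x where "x < s - 1" "lft s = lft (Suc x)" unfolding L_def A0_def by blast
    then show False using lft_inj[of s "Suc x"] by (simp add: Suc_le_s)
  qed
  moreover have "lft s \<notin> W"
  proof
    assume "lft s \<in> W"
    then obtain x where "x < s - 1" "lft s = low (Suc x)" unfolding W_def A1_def by blast
    then show False using lft_ne_low[of s "Suc x"] s0 by (simp add: Suc_le_s)
  qed
  moreover have "low 0 \<noteq> lft s" using lft_ne_low[of s 0] s0 by auto
  ultimately have "card (Eof c) = 2 + (card L + card W)"
    unfolding Eof_def L_def[symmetric] W_def[symmetric] A0_def[symmetric] A1_def[symmetric]
    using fin d1 by (simp add: card_Un_disjoint L_def W_def)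
  moreover have "card A0 + card A1 = (s - 1) + ny c"
  proof -
    have "A0 \<union> A1 = {..<s - 1}" unfolding A0_def A1_def by auto
    moreover have "A0 \<inter> A1 = {j. j < length c \<and> c ! j = 2}"
      using CC_nth[OF c] c unfolding A0_def A1_def CC_def by force
    moreover have "ny c = card {j. j < length c \<and> c ! j = 2}"
      unfolding ny_def by (rule length_filter_conv_card)
    ultimately show ?thesis using card_Un_Int[OF fin] by simp
  qed
  ultimately show ?thesis using card_TT cL cW s0 by simp
qed

lemma fst_Eof: "fst ` Eof c = PP ` XX c"
  unfolding Eof_def XX_def image_Un image_insert image_empty image_image
  by (simp add: low_def lft_def NN_0 mm_def)

lemma COMB0:
  "fpoly Kp = (\<Sum>c\<in>CC (s - 1). monom 1 (ny c) * fpoly (Kc c))"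
proof -
  have LT: "\<forall>t\<in>TT. lev t = mm" unfolding TT_def using lev_Tm by auto
  have finT: "finite TT" "TT \<noteq> {}" unfolding TT_def by auto
  have "fpoly Kp = fT TT" unfolding fpoly_fT terminals_Kp TT_def ..
  also have "\<dots> = (\<Sum>Ein\<in>Adm TT. monom 1 (card Ein - card TT) * fT (fst ` Ein))"
    by (rule fT_decomp[OF LT mm_pos finT])
  also have "\<dots> = (\<Sum>c\<in>CC (s - 1). monom 1 (card (Eof c) - card TT) * fT (fst ` Eof c))"
    unfolding Adm_TT by (rule sum.reindex[OF Eof_inj, unfolded comp_def])
  also have "\<dots> = (\<Sum>c\<in>CC (s - 1). monom 1 (ny c) * fpoly (Kc c))"
    by (rule sum.cong[OF refl]) (simp add: card_Eof fst_Eof fpoly_fT terminals_Kc)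
  finally show ?thesis .
qed

end


lemma COMB:
  assumes "0 < s" "length k = s"
  shows "fpoly (Kv (\<lambda>q. if even q \<and> q < 2 * s then 1 else 0) (KK s k))
       = (\<Sum>c\<in>CC (s - 1). monom 1 (ny c) * fpoly (Kv (cnt c) (KK s k)))"
  using COMB0[OF assms] by (simp add: Kp_def[OF assms] Kc_def[OF assms])

lemma mpi_add: "map_poly (of_int :: int \<Rightarrow> rat) (a + b) = map_poly of_int a + map_poly of_int b"
  by (rule poly_eqI) (simp add: coeff_map_poly)

lemma mpi_sum: "map_poly (of_int :: int \<Rightarrow> rat) (\<Sum>x\<in>A. f x) = (\<Sum>x\<in>A. map_poly of_int (f x))"
proof (induction A rule: infinite_finite_induct)
  case (insert x F) then show ?case by (simp add: mpi_add)
qed simp_all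

lemma X_pow: "([:0, 1:] :: 'a :: comm_ring_1 poly) ^ n = monom 1 n"
  using monom_altdef[of "1 :: 'a" n] by simp

lemma mpi_monom: "map_poly (of_int :: int \<Rightarrow> rat) (monom 1 n * p) = [:0, 1:] ^ n * map_poly of_int p"
  by (rule poly_eqI) (simp add: coeff_map_poly X_pow coeff_monom_mult)

theorem theorem1p2:
  fixes s :: nat
  assumes "0 < s"
  shows "yzero s (Dop s (Psi (2 * s - 1))) = (\<lambda>_. 0)"
proof
  fix k :: "nat list"
  show "yzero s (Dop s (Psi (2 * s - 1))) k = 0"
  proof (cases "length k = s")
    case False then show ?thesis by (simp add: yzero_def)
  next
    case True
    define M where "M = 2 * s - 1"
    define K where "K = KK s k"
    define G where "G = (\<lambda>k. map_poly (of_int :: int \<Rightarrow> rat) (fpoly k))"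
    have lK: "length K = M" by (simp add: K_def KK_def M_def)
    have ag: "agree M (Psi M) (EE G)" by (simp add: agree_def Psi_def EE_def G_def)
    have "agree M (Dx s (Psi M)) (EE (fold (\<lambda>i g k. g (inc (2 * i) k)) [0..<s] G))"
      unfolding Dx_def by (rule Dx_agree[OF ag]) (auto simp: M_def)
    then have dx: "Dx s (Psi M) K = EE (\<lambda>K. G (Kv (\<lambda>q. if even q \<and> q < 2 * s then 1 else 0) K)) K"
      using lK Dx_expand[of s K G] assms unfolding agree_def EE_def by (simp add: M_def)
    have agP: "agree M (Pop s (Psi M)) (EE (fold fo' [0..<s - 1] G))"
      unfolding Pop_def by (rule Pop_agree[OF ag]) (auto simp: M_def)
    then have pop: "Pop s (Psi M) K = EE (\<lambda>K. \<Sum>c\<in>CC (s - 1). [:0, 1:] ^ ny c * G (Kv (cnt c) K)) K"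
    proof -
      have "s - 1 = 0 \<or> 2 * (s - 1) < length K" using lK assms unfolding M_def by linarith
      then show ?thesis using lK Pop_expand[of "s - 1" K G] agP unfolding agree_def EE_def by simp
    qed
    have "G (Kv (\<lambda>q. if even q \<and> q < 2 * s then 1 else 0) K) = (\<Sum>c\<in>CC (s - 1). [:0, 1:] ^ ny c * G (Kv (cnt c) K))"
      unfolding G_def K_def COMB[OF assms True] mpi_sum mpi_monom ..
    then have "Dop s (Psi M) K = 0" unfolding Dop_def dx pop EE_def by simp
    moreover have "map (\<lambda>q. if even q then k ! (q div 2) else 0) [0..<2 * s - 1] = K"
      by (simp add: K_def KK_def)
    ultimately show ?thesis using True unfolding yzero_def M_def by simp
  qed
qed

end
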